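(* For $L\in T^r(V^* )$ define $\Psi_L(X,w)=L(X.w)$ for $X\in\mathbf{E}$, $w\in T^r(V)$, where $X.(w_1\otimes\cdots\otimes w_r)=Xw_1\otimes\cdots\otimes Xw_r$. Then $\Psi_L\in\mathcal{P}^r[\mathbf{E}]\otimes_\Lambda T^r(V^* )$, the $\Lambda$-linear map $\Psi:L\mapsto\Psi_L$ has image contained in $\Gamma_r$, and $\Psi:T^r(V^* )\to\Gamma_r$ is an isomorphism of $\mathrm{GL}(V)$-modules, where $\mathrm{GL}(V)$ acts on $T^r(V^* )$ by the diagonal action $\rho_r^*$ and on $\Gamma_r$ by $\hat L$.
   Context: $\Lambda=\varinjlim\wedge(\mathbb{C}^N)$ is the infinite Grassmann algebra ($\mathbb{Z}_2$-graded, supercommutative; modules are $\mathbb{Z}_2$-graded with $\lambda v=(-1)^{[\lambda][v]}v\lambda$; $\Lambda$-linear means $T(v\lambda)=T(v)\lambda$). $V_{\mathbb{C}}$ is a finite-dimensional $\mathbb{Z}_2$-graded complex vector space, $V=V_{\mathbb{C}}\otimes\Lambda$, $\mathrm{GL}(V)$ the group of invertible even $\Lambda$-linear endomorphisms, $\mathbf{E}=\mathrm{End}_\Lambda(V)_{\bar0}$. $V^*=\mathrm{Hom}_\Lambda(V,\Lambda)$ with $(g\bar v)(w)=\bar v(g^{-1}w)$, and $T^r(V^* )=(V^* )^{\otimes_\Lambda r}$ with diagonal action $\rho^*_r$; $T^r(V^* )$ is identified with $T^r(V)^*$ via the pairing $\gamma(\bar v_1\otimes\cdots\otimes\bar v_r\otimes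 w_1\otimes\cdots\otimes w_r)=(-1)^J\prod_i\bar v_i(w_i)$, $J=\sum_\mu[w_\mu]([\bar v_{\mu+1}]+\cdots+[\bar v_r])$. Polynomial functions on $\mathbf{E}=(\mathrm{End}_{\mathbb{C}}(V_{\mathbb{C}})\otimes\Lambda)_{\bar0}$: with respect to a homogeneous basis $b_k$ of $\mathrm{End}_{\mathbb{C}}(V_{\mathbb{C}})$, functions $\sum_kb_k\lambda_k\mapsto$ finite $\Lambda$-linear combinations of monomials in the $\lambda_k$; $\mathcal{P}^r[\mathbf{E}]$ denotes those homogeneous of total degree $r$. Elements of $\mathcal{P}^r[\mathbf{E}]\otimes_\Lambda T^r(V^* )$ are regarded as functions on $\mathbf{E}\times T^r(V)$. For $g\in\mathrm{GL}(V)$: $(L_gf)(X)=f(g^{-1}X)$, $(R_gf)(X)=f(Xg)$; $\hat L_g=L_g\otimes\mathrm{id}$, $\hat R_g=R_g\otimes\rho^*_r(g)$, so $(\hat R_g\Phi)(X,w)=\Phi(Xg,g^{-1}w)$. $\Gamma_r=(\mathcal{P}^r[\mathbf{E}]\otimes_\Lambda T^r(V^* ))^{\hat R(\mathrm{GL}(V))}$ is the submodule of $\hat R$-invariants. *)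

theory Defs
  imports Complex_Main
begin

text \<open>An element of \<Lambda> is written as sum over finite sets S of nat of a S e_S, where
  e_S = e_{s1} ... e_{sk} with s1 < ... < sk. We represent it by its coefficient function.\<close>

type_synonym grass = "nat set \<Rightarrow> complex"

definition Lam :: "grass set" where
  "Lam = {a. finite {S. a S \<noteq> 0} \<and> (\<forall>S. a S \<noteq> 0 \<longrightarrow> finite S)}"

definition gzero :: grass where "gzero = (\<lambda>S. 0)"
definition gone :: grass where "gone = (\<lambda>S. if S = {} then 1 else 0)"
definition gadd :: "grass \<Rightarrow> grass \<Rightarrow> grass" where "gadd a b = (\<lambda>S. a S + b S)"
definition gscale :: "complex \<Rightarrow> grass \<Rightarrow> grass" where "gscale c a = (\<lambda>S. c * a S)"

text \<open>sign of e_T e_U = gsign T U * e_(T \<union> U) for disjoint T, U\<close>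
definition gsign :: "nat set \<Rightarrow> nat set \<Rightarrow> complex" where
  "gsign T U = (-1) ^ card {(i, j). i \<in> T \<and> j \<in> U \<and> j < i}"

definition gmul :: "grass \<Rightarrow> grass \<Rightarrow> grass" where
  "gmul a b = (\<lambda>S. if finite S then (\<Sum>T\<in>Pow S. gsign T (S - T) * a T * b (S - T)) else 0)"

definition gsum :: "('i \<Rightarrow> grass) \<Rightarrow> 'i set \<Rightarrow> grass" where
  "gsum F K = (\<lambda>S. \<Sum>k\<in>K. F k S)"

definition glsum :: "grass list \<Rightarrow> grass" where
  "glsum xs = foldr gadd xs gzero"

definition gprod :: "grass list \<Rightarrow> grass" where
  "gprod xs = foldr gmul xs gone"

text \<open>homogeneity: hom p a means a has parity p (True = odd)\<close>
definition hom :: "bool \<Rightarrow> grass \<Rightarrow> bool" where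
  "hom p a = (\<forall>S. a S \<noteq> 0 \<longrightarrow> odd (card S) = p)"

section \<open>V = V_C \<otimes> \<Lambda>, with V_C of superdimension (m|n)\<close>

text \<open>Homogeneous basis e_0,...,e_(m+n-1) of V_C; e_i is odd iff m \<le> i.\<close>
definition pty :: "nat \<Rightarrow> nat \<Rightarrow> bool" where "pty m i = (m \<le> i)"

type_synonym mat = "nat \<Rightarrow> nat \<Rightarrow> grass"

text \<open>E = even \<Lambda>-linear endomorphisms of V, as matrices: X e_j = \<Sum>_i e_i X i j.\<close>
definition Emat :: "nat \<Rightarrow> nat \<Rightarrow> mat set" where
  "Emat m n = {X. \<forall>i j. (i < m + n \<and> j < m + n \<longrightarrow> X i j \<in> Lam \<and> hom (pty m i \<noteq> pty m j) (X i j))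
                 \<and> (\<not> (i < m + n \<and> j < m + n) \<longrightarrow> X i j = gzero)}"

definition mmul :: "nat \<Rightarrow> nat \<Rightarrow> mat \<Rightarrow> mat \<Rightarrow> mat" where
  "mmul m n X Y = (\<lambda>i j. if i < m + n \<and> j < m + n then gsum (\<lambda>k. gmul (X i k) (Y k j)) {..<m + n} else gzero)"

definition mone :: "nat \<Rightarrow> nat \<Rightarrow> mat" where
  "mone m n = (\<lambda>i j. if i < m + n \<and> j = i then gone else gzero)"

definition GLV :: "nat \<Rightarrow> nat \<Rightarrow> mat set" where
  "GLV m n = {g \<in> Emat m n. \<exists>h \<in> Emat m n. mmul m n g h = mone m n \<and> mmul m n h g = mone m n}"

definition ginv :: "nat \<Rightarrow> nat \<Rightarrow> mat \<Rightarrow> mat" where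
  "ginv m n g = (SOME h. h \<in> Emat m n \<and> mmul m n g h = mone m n \<and> mmul m n h g = mone m n)"

text \<open>w = \<Sum>_I e_I w_I, with e_I = e_(i_0) \<otimes> ... \<otimes> e_(i_(r-1)), I a list of length r.\<close>
type_synonym tvec = "nat list \<Rightarrow> grass"

definition Idx :: "nat \<Rightarrow> nat \<Rightarrow> nat \<Rightarrow> nat list set" where
  "Idx m n r = {I. length I = r \<and> set I \<subseteq> {..<m + n}}"

definition TrV :: "nat \<Rightarrow> nat \<Rightarrow> nat \<Rightarrow> tvec set" where
  "TrV m n r = {w. (\<forall>I \<in> Idx m n r. w I \<in> Lam) \<and> (\<forall>I. I \<notin> Idx m n r \<longrightarrow> w I = gzero)}"

definition tadd :: "tvec \<Rightarrow> tvec \<Rightarrow> tvec" where "tadd w w' = (\<lambda>I. gadd (w I) (w' I))"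
definition trmul :: "tvec \<Rightarrow> grass \<Rightarrow> tvec" where "trmul w c = (\<lambda>I. gmul (w I) c)"

text \<open>X.w for X \<in> E: X.(e_I) = X e_(i_0) \<otimes> ... \<otimes> X e_(i_(r-1)), extended \<Lambda>-linearly.
  Moving the (homogeneous) coefficients X j_a i_a to the right produces the Koszul sign.\<close>
definition tsign :: "nat \<Rightarrow> nat \<Rightarrow> nat list \<Rightarrow> nat list \<Rightarrow> complex" where
  "tsign m r J I = (-1) ^ card {(a, b). a < b \<and> b < r \<and> (pty m (J ! a) \<noteq> pty m (I ! a)) \<and> pty m (J ! b)}"

definition tact :: "nat \<Rightarrow> nat \<Rightarrow> nat \<Rightarrow> mat \<Rightarrow> tvec \<Rightarrow> tvec" where
  "tact m n r X w = (\<lambda>J. if J \<in> Idx m n r then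
      gsum (\<lambda>I. gscale (tsign m r J I) (gmul (gprod (map (\<lambda>a. X (J ! a) (I ! a)) [0..<r])) (w I))) (Idx m n r)
    else gzero)"

section \<open>T^r(V^*) identified with T^r(V)^* = Hom_\<Lambda>(T^r(V), \<Lambda>) (via the pairing \<gamma>)\<close>

type_synonym tdual = "tvec \<Rightarrow> grass"

definition TrVd :: "nat \<Rightarrow> nat \<Rightarrow> nat \<Rightarrow> tdual set" where
  "TrVd m n r = {L. (\<forall>w \<in> TrV m n r. L w \<in> Lam)
     \<and> (\<forall>w \<in> TrV m n r. \<forall>w' \<in> TrV m n r. L (tadd w w') = gadd (L w) (L w'))
     \<and> (\<forall>w \<in> TrV m n r. \<forall>c \<in> Lam. L (trmul w c) = gmul (L w) c)
     \<and> (\<forall>w. w \<notin> TrV m n r \<longrightarrow> L w = gzero)}"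

definition dadd :: "tdual \<Rightarrow> tdual \<Rightarrow> tdual" where "dadd L L' = (\<lambda>w. gadd (L w) (L' w))"
definition dsmul :: "grass \<Rightarrow> tdual \<Rightarrow> tdual" where "dsmul c L = (\<lambda>w. gmul c (L w))"

definition rho_dual :: "nat \<Rightarrow> nat \<Rightarrow> nat \<Rightarrow> mat \<Rightarrow> tdual \<Rightarrow> tdual" where
  "rho_dual m n r g L = (\<lambda>w. if w \<in> TrV m n r then L (tact m n r (ginv m n g) w) else gzero)"

text \<open>Coordinates of X \<in> E w.r.t. the basis of elementary matrices are the entries X i j
  (up to a fixed sign per coordinate).\<close>
definition Pr :: "nat \<Rightarrow> nat \<Rightarrow> nat \<Rightarrow> (mat \<Rightarrow> grass) set" where
  "Pr m n r = {f. (\<forall>X. X \<notin> Emat m n \<longrightarrow> f X = gzero) \<and>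
     (\<exists>cs :: (grass \<times> (nat \<times> nat) list) list.
        (\<forall>(c, ks) \<in> set cs. c \<in> Lam \<and> length ks = r \<and> (\<forall>(i, j) \<in> set ks. i < m + n \<and> j < m + n)) \<and>
        (\<forall>X \<in> Emat m n. f X = glsum (map (\<lambda>(c, ks). gmul c (gprod (map (\<lambda>(i, j). X i j) ks))) cs)))}"

type_synonym fn = "mat \<times> tvec \<Rightarrow> grass"

definition PT :: "nat \<Rightarrow> nat \<Rightarrow> nat \<Rightarrow> fn set" where
  "PT m n r = {\<Phi>. (\<forall>X w. \<not> (X \<in> Emat m n \<and> w \<in> TrV m n r) \<longrightarrow> \<Phi> (X, w) = gzero) \<and>
     (\<exists>ps :: ((mat \<Rightarrow> grass) \<times> tdual) list.
        (\<forall>(f, L) \<in> set ps. f \<in> Pr m n r \<and> L \<in> TrVd m n r) \<and>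
        (\<forall>X \<in> Emat m n. \<forall>w \<in> TrV m n r. \<Phi> (X, w) = glsum (map (\<lambda>(f, L). gmul (f X) (L w)) ps)))}"

definition fadd :: "fn \<Rightarrow> fn \<Rightarrow> fn" where "fadd F G = (\<lambda>x. gadd (F x) (G x))"
definition fsmul :: "grass \<Rightarrow> fn \<Rightarrow> fn" where "fsmul c F = (\<lambda>x. gmul c (F x))"

definition Rhat :: "nat \<Rightarrow> nat \<Rightarrow> nat \<Rightarrow> mat \<Rightarrow> fn \<Rightarrow> fn" where
  "Rhat m n r g \<Phi> = (\<lambda>(X, w). if X \<in> Emat m n \<and> w \<in> TrV m n r
      then \<Phi> (mmul m n X g, tact m n r (ginv m n g) w) else gzero)"

definition Lhat :: "nat \<Rightarrow> nat \<Rightarrow> nat \<Rightarrow> mat \<Rightarrow> fn \<Rightarrow> fn" where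
  "Lhat m n r g \<Phi> = (\<lambda>(X, w). if X \<in> Emat m n \<and> w \<in> TrV m n r
      then \<Phi> (mmul m n (ginv m n g) X, w) else gzero)"

definition Gamma :: "nat \<Rightarrow> nat \<Rightarrow> nat \<Rightarrow> fn set" where
  "Gamma m n r = {\<Phi> \<in> PT m n r. \<forall>g \<in> GLV m n. Rhat m n r g \<Phi> = \<Phi>}"

definition Psi :: "nat \<Rightarrow> nat \<Rightarrow> nat \<Rightarrow> tdual \<Rightarrow> fn" where
  "Psi m n r L = (\<lambda>(X, w). if X \<in> Emat m n \<and> w \<in> TrV m n r then L (tact m n r X w) else gzero)"

end

theory Submission
  imports Defs "Jordan_Normal_Form.Char_Poly" "HOL-Computational_Algebra.Polynomial"
begin

section \<open>Raw Grassmann algebra facts\<close>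

definition ginv_cnt :: "nat set \<Rightarrow> nat set \<Rightarrow> nat" where
  "ginv_cnt T U = card {(i, j). i \<in> T \<and> j \<in> U \<and> j < i}"

lemma gsign_cnt: "gsign T U = (-1) ^ ginv_cnt T U"
  unfolding gsign_def ginv_cnt_def by simp

lemma ginv_cnt_Un_left:
  assumes "finite A" "finite B" "finite C" "A \<inter> B = {}"
  shows "ginv_cnt (A \<union> B) C = ginv_cnt A C + ginv_cnt B C"
proof -
  have e: "{(i, j). i \<in> A \<union> B \<and> j \<in> C \<and> j < i} =
    {(i, j). i \<in> A \<and> j \<in> C \<and> j < i} \<union> {(i, j). i \<in> B \<and> j \<in> C \<and> j < i}" by auto
  have f1: "finite {(i, j). i \<in> A \<and> j \<in> C \<and> j < i}"
    by (rule finite_subset[of _ "A \<times> C"]) (use assms in auto)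
  have f2: "finite {(i, j). i \<in> B \<and> j \<in> C \<and> j < i}"
    by (rule finite_subset[of _ "B \<times> C"]) (use assms in auto)
  show ?thesis unfolding ginv_cnt_def e
    by (rule card_Un_disjoint[OF f1 f2]) (use assms in auto)
qed

lemma ginv_cnt_Un_right:
  assumes "finite A" "finite B" "finite C" "B \<inter> C = {}"
  shows "ginv_cnt A (B \<union> C) = ginv_cnt A B + ginv_cnt A C"
proof -
  have e: "{(i, j). i \<in> A \<and> j \<in> B \<union> C \<and> j < i} =
    {(i, j). i \<in> A \<and> j \<in> B \<and> j < i} \<union> {(i, j). i \<in> A \<and> j \<in> C \<and> j < i}" by auto
  have f1: "finite {(i, j). i \<in> A \<and> j \<in> B \<and> j < i}"
    by (rule finite_subset[of _ "A \<times> B"]) (use assms in auto)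
  have f2: "finite {(i, j). i \<in> A \<and> j \<in> C \<and> j < i}"
    by (rule finite_subset[of _ "A \<times> C"]) (use assms in auto)
  show ?thesis unfolding ginv_cnt_def e
    by (rule card_Un_disjoint[OF f1 f2]) (use assms in auto)
qed

lemma ginv_cnt_swap:
  assumes "finite A" "finite B" "A \<inter> B = {}"
  shows "ginv_cnt A B + ginv_cnt B A = card A * card B"
proof -
  have e: "A \<times> B = {(i, j). i \<in> A \<and> j \<in> B \<and> j < i} \<union> {(i, j). i \<in> A \<and> j \<in> B \<and> i < j}"
    using assms by auto
  have f1: "finite {(i, j). i \<in> A \<and> j \<in> B \<and> j < i}"
    by (rule finite_subset[of _ "A \<times> B"]) (use assms in auto)
  have f2: "finite {(i, j). i \<in> A \<and> j \<in> B \<and> i < j}"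
    by (rule finite_subset[of _ "A \<times> B"]) (use assms in auto)
  have c2: "card {(i, j). i \<in> A \<and> j \<in> B \<and> i < j} = ginv_cnt B A"
  proof -
    have "{(i, j). i \<in> A \<and> j \<in> B \<and> i < j} = (\<lambda>(x,y). (y,x)) ` {(i, j). i \<in> B \<and> j \<in> A \<and> j < i}"
      by auto
    moreover have "inj_on (\<lambda>(x,y). (y,x)) {(i, j). i \<in> B \<and> j \<in> A \<and> j < i}"
      by (auto simp: inj_on_def)
    ultimately show ?thesis unfolding ginv_cnt_def by (simp add: card_image)
  qed
  have "card A * card B = card (A \<times> B)" by (simp add: card_cartesian_product)
  also have "\<dots> = ginv_cnt A B + ginv_cnt B A"
    unfolding e ginv_cnt_def[of A B] c2[symmetric]
    by (rule card_Un_disjoint[OF f1 f2]) auto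
  finally show ?thesis by simp
qed

lemma gsign_assoc:
  assumes "finite A" "finite B" "finite C" "A \<inter> B = {}" "A \<inter> C = {}" "B \<inter> C = {}"
  shows "gsign A B * gsign (A \<union> B) C = gsign A (B \<union> C) * gsign B C"
  using assms by (simp add: gsign_cnt ginv_cnt_Un_left ginv_cnt_Un_right power_add)

lemma gsign_empty_left[simp]: "gsign {} U = 1" by (simp add: gsign_def)
lemma gsign_empty_right[simp]: "gsign T {} = 1" by (simp add: gsign_def)

lemma gmul_assoc_raw: "gmul (gmul a b) c = gmul a (gmul b c)"
proof
  fix S :: "nat set"
  show "gmul (gmul a b) c S = gmul a (gmul b c) S"
  proof (cases "finite S")
    case False then show ?thesis by (simp add: gmul_def)
  next
    case fin: True
    define g where "g = (\<lambda>(A, B). gsign A B * gsign (A \<union> B) (S - A - B) * a A * b B * c (S - A - B))"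
    have "gmul (gmul a b) c S = (\<Sum>T\<in>Pow S. \<Sum>A\<in>Pow T. gsign T (S - T) * (gsign A (T - A) * a A * b (T - A)) * c (S - T))"
      using fin by (simp add: gmul_def sum_distrib_left sum_distrib_right finite_subset Pow_def)
    also have "\<dots> = (\<Sum>(T, A)\<in>Sigma (Pow S) Pow. gsign T (S - T) * (gsign A (T - A) * a A * b (T - A)) * c (S - T))"
      using fin by (subst sum.Sigma) (auto intro: finite_subset)
    also have "\<dots> = (\<Sum>p\<in>Sigma (Pow S) (\<lambda>A. Pow (S - A)). g p)"
    proof (rule sum.reindex_bij_witness[where i = "\<lambda>(A, B). (A \<union> B, A)" and j = "\<lambda>(T, A). (A, T - A)"])
      fix p assume "p \<in> Sigma (Pow S) Pow"
      then obtain T A where p: "p = (T, A)" "T \<subseteq> S" "A \<subseteq> T" by auto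
      then show "(case (case p of (T, A) \<Rightarrow> (A, T - A)) of (A, B) \<Rightarrow> (A \<union> B, A)) = p" by auto
      show "(case p of (T, A) \<Rightarrow> (A, T - A)) \<in> Sigma (Pow S) (\<lambda>A. Pow (S - A))" using p by auto
      have fA: "finite A" "finite (T - A)" "finite (S - T)" using p fin by (auto intro: finite_subset)
      have e1: "A \<union> (T - A) = T" "S - A - (T - A) = S - T" using p by auto
      show "g (case p of (T, A) \<Rightarrow> (A, T - A)) = (case p of (T, A) \<Rightarrow> gsign T (S - T) * (gsign A (T - A) * a A * b (T - A)) * c (S - T))"
        using p by (simp add: g_def e1 Un_absorb1)
    next
      fix q assume "q \<in> Sigma (Pow S) (\<lambda>A. Pow (S - A))"
      then obtain A B where q: "q = (A, B)" "A \<subseteq> S" "B \<subseteq> S - A" by auto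
      then show "(case (case q of (A, B) \<Rightarrow> (A \<union> B, A)) of (T, A) \<Rightarrow> (A, T - A)) = q" by auto
      show "(case q of (A, B) \<Rightarrow> (A \<union> B, A)) \<in> Sigma (Pow S) Pow" using q by auto
    qed
    also have "\<dots> = (\<Sum>A\<in>Pow S. \<Sum>B\<in>Pow (S - A). g (A, B))"
      using fin by (subst sum.Sigma) (auto intro: finite_subset)
    also have "\<dots> = (\<Sum>A\<in>Pow S. \<Sum>B\<in>Pow (S - A). gsign A (S - A) * a A * (gsign B (S - A - B) * b B * c (S - A - B)))"
    proof (rule sum.cong[OF refl], rule sum.cong[OF refl])
      fix A B assume A: "A \<in> Pow S" and B: "B \<in> Pow (S - A)"
      have fA: "finite A" "finite B" "finite (S - A - B)" using A B fin by (auto intro: finite_subset)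
      have e: "B \<union> (S - A - B) = S - A" using B by auto
      have "gsign A B * gsign (A \<union> B) (S - A - B) = gsign A (B \<union> (S - A - B)) * gsign B (S - A - B)"
        by (rule gsign_assoc) (use fA B in auto)
      then show "g (A, B) = gsign A (S - A) * a A * (gsign B (S - A - B) * b B * c (S - A - B))"
        unfolding g_def e by (simp add: algebra_simps)
    qed
    also have "\<dots> = gmul a (gmul b c) S"
      using fin by (simp add: gmul_def sum_distrib_left finite_subset Diff_Diff_Int)
    finally show ?thesis .
  qed
qed

lemma gmul_nonzeroE:
  assumes "gmul a b S \<noteq> 0"
  obtains T where "finite S" "T \<subseteq> S" "a T \<noteq> 0" "b (S - T) \<noteq> 0"
proof -
  have fin: "finite S" using assms by (auto simp: gmul_def split: if_splits)
  then have "(\<Sum>T\<in>Pow S. gsign T (S - T) * a T * b (S - T)) \<noteq> 0" using assms by (simp add: gmul_def)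
  then obtain T where "T \<in> Pow S" "gsign T (S - T) * a T * b (S - T) \<noteq> 0"
    by (meson sum.neutral)
  then show ?thesis using that fin by auto
qed

lemma Lam_gzero[simp]: "gzero \<in> Lam" by (simp add: Lam_def gzero_def)
lemma Lam_gone[simp]: "gone \<in> Lam" by (simp add: Lam_def gone_def)

lemma Lam_gadd[simp]: assumes "a \<in> Lam" "b \<in> Lam" shows "gadd a b \<in> Lam"
proof -
  have "{S. gadd a b S \<noteq> 0} \<subseteq> {S. a S \<noteq> 0} \<union> {S. b S \<noteq> 0}" by (auto simp: gadd_def)
  then show ?thesis using assms unfolding Lam_def by (auto simp: gadd_def intro: finite_subset)
qed

lemma Lam_gscale[simp]: assumes "a \<in> Lam" shows "gscale c a \<in> Lam"
proof -
  have "{S. gscale c a S \<noteq> 0} \<subseteq> {S. a S \<noteq> 0}" by (auto simp: gscale_def)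
  then show ?thesis using assms unfolding Lam_def by (auto simp: gscale_def intro: finite_subset)
qed

lemma Lam_gmul[simp]: assumes "a \<in> Lam" "b \<in> Lam" shows "gmul a b \<in> Lam"
proof -
  have "{S. gmul a b S \<noteq> 0} \<subseteq> (\<lambda>(T, U). T \<union> U) ` ({S. a S \<noteq> 0} \<times> {S. b S \<noteq> 0})"
  proof
    fix S assume "S \<in> {S. gmul a b S \<noteq> 0}"
    then obtain T where "T \<subseteq> S" "a T \<noteq> 0" "b (S - T) \<noteq> 0" by (auto elim: gmul_nonzeroE)
    then show "S \<in> (\<lambda>(T, U). T \<union> U) ` ({S. a S \<noteq> 0} \<times> {S. b S \<noteq> 0})"
      by (intro image_eqI[of _ _ "(T, S - T)"]) auto
  qed
  moreover have "finite ((\<lambda>(T, U). T \<union> U) ` ({S. a S \<noteq> 0} \<times> {S. b S \<noteq> 0}))"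
    using assms by (auto simp: Lam_def)
  ultimately show ?thesis unfolding Lam_def by (auto intro: finite_subset elim: gmul_nonzeroE)
qed

lemma Lam_infinite: "a \<in> Lam \<Longrightarrow> infinite S \<Longrightarrow> a S = 0"
  by (auto simp: Lam_def)

lemma gmul_gone_left: assumes "a \<in> Lam" shows "gmul gone a = a"
proof
  fix S show "gmul gone a S = a S"
  proof (cases "finite S")
    case True
    have "gmul gone a S = (\<Sum>T\<in>Pow S. gsign T (S - T) * gone T * a (S - T))"
      using True by (simp add: gmul_def)
    also have "\<dots> = (\<Sum>T\<in>Pow S. if T = {} then a S else 0)"
      by (rule sum.cong) (auto simp: gone_def)
    also have "\<dots> = a S" using True by (simp add: sum.delta')
    finally show ?thesis .
  qed (use assms in \<open>simp add: gmul_def Lam_infinite\<close>)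
qed

lemma gmul_gone_right: assumes "a \<in> Lam" shows "gmul a gone = a"
proof
  fix S show "gmul a gone S = a S"
  proof (cases "finite S")
    case True
    have "gmul a gone S = (\<Sum>T\<in>Pow S. gsign T (S - T) * a T * gone (S - T))"
      using True by (simp add: gmul_def)
    also have "\<dots> = (\<Sum>T\<in>Pow S. if T = S then a S else 0)"
      by (rule sum.cong) (auto simp: gone_def)
    also have "\<dots> = a S" using True by (simp add: sum.delta')
    finally show ?thesis .
  qed (use assms in \<open>simp add: gmul_def Lam_infinite\<close>)
qed

lemma gmul_gadd_left: "gmul (gadd a b) c = gadd (gmul a c) (gmul b c)"
  by (auto simp: gmul_def gadd_def sum.distrib algebra_simps)
lemma gmul_gadd_right: "gmul a (gadd b c) = gadd (gmul a b) (gmul a c)"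
  by (auto simp: gmul_def gadd_def sum.distrib algebra_simps)
lemma gmul_gscale_left: "gmul (gscale c a) b = gscale c (gmul a b)"
  by (auto simp: gmul_def gscale_def sum_distrib_left algebra_simps)
lemma gmul_gscale_right: "gmul a (gscale c b) = gscale c (gmul a b)"
  by (auto simp: gmul_def gscale_def sum_distrib_left algebra_simps)
lemma gmul_gzero_left: "gmul gzero a = gzero" by (auto simp: gmul_def gzero_def)
lemma gmul_gzero_right: "gmul a gzero = gzero" by (auto simp: gmul_def gzero_def)

lemma hom_gmul: assumes "Defs.hom p a" "Defs.hom q b" shows "Defs.hom (p \<noteq> q) (gmul a b)"
  unfolding Defs.hom_def
proof (intro allI impI)
  fix S assume "gmul a b S \<noteq> 0"
  then obtain T where T: "finite S" "T \<subseteq> S" "a T \<noteq> 0" "b (S - T) \<noteq> 0" by (auto elim: gmul_nonzeroE)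
  have "card S = card T + card (S - T)" using T
    by (metis card_Diff_subset card_mono diff_add_inverse finite_subset le_add_diff_inverse)
  then show "odd (card S) = (p \<noteq> q)" using T assms unfolding Defs.hom_def by fastforce
qed

lemma gsign_swap:
  assumes "finite T" "finite U" "T \<inter> U = {}"
  shows "gsign T U = (-1) ^ (card T * card U) * gsign U T"
proof -
  have "ginv_cnt T U + ginv_cnt U T = card T * card U" by (rule ginv_cnt_swap[OF assms])
  then have e: "card T * card U + ginv_cnt U T = ginv_cnt T U + 2 * ginv_cnt U T" by simp
  have "(-1::complex) ^ (card T * card U) * gsign U T = (-1) ^ (card T * card U + ginv_cnt U T)"
    by (simp add: gsign_cnt power_add)
  also have "\<dots> = (-1) ^ (ginv_cnt T U + 2 * ginv_cnt U T)" by (simp only: e)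
  also have "\<dots> = gsign T U" by (simp add: gsign_cnt power_add power_mult)
  finally show ?thesis by simp
qed

lemma gmul_supercomm:
  assumes "Defs.hom p a" "Defs.hom q b"
  shows "gmul a b = gscale (if p \<and> q then -1 else 1) (gmul b a)"
proof
  fix S show "gmul a b S = gscale (if p \<and> q then -1 else 1) (gmul b a) S"
  proof (cases "finite S")
    case fin: True
    have "gmul b a S = (\<Sum>U\<in>Pow S. gsign U (S - U) * b U * a (S - U))" using fin by (simp add: gmul_def)
    also have "\<dots> = (\<Sum>T\<in>Pow S. gsign (S - T) T * b (S - T) * a T)"
      by (rule sum.reindex_bij_witness[where i = "\<lambda>T. S - T" and j = "\<lambda>T. S - T"])
         (auto simp: Diff_Diff_Int Int_absorb1)
    finally have e: "gmul b a S = \<dots>" .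
    have "gmul a b S = (\<Sum>T\<in>Pow S. (if p \<and> q then -1 else 1) * (gsign (S - T) T * b (S - T) * a T))"
    proof -
      have "gmul a b S = (\<Sum>T\<in>Pow S. gsign T (S - T) * a T * b (S - T))" using fin by (simp add: gmul_def)
      also have "\<dots> = (\<Sum>T\<in>Pow S. (if p \<and> q then -1 else 1) * (gsign (S - T) T * b (S - T) * a T))"
      proof (rule sum.cong[OF refl])
        fix T assume T: "T \<in> Pow S"
        show "gsign T (S - T) * a T * b (S - T) = (if p \<and> q then -1 else 1) * (gsign (S - T) T * b (S - T) * a T)"
        proof (cases "a T = 0 \<or> b (S - T) = 0")
          case False
          then have pa: "odd (card T) = p" and pb: "odd (card (S - T)) = q" using assms by (auto simp: Defs.hom_def)
          have fT: "finite T" "finite (S - T)" using T fin by (auto intro: finite_subset)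
          have sw: "gsign T (S - T) = (-1) ^ (card T * card (S - T)) * gsign (S - T) T"
            by (rule gsign_swap) (use fT in auto)
          have "(-1::complex) ^ (card T * card (S - T)) = (if p \<and> q then -1 else 1)"
            using pa pb by (cases "even (card T * card (S - T))") auto
          then show ?thesis using sw by simp
        qed auto
      qed
      finally show ?thesis .
    qed
    then show ?thesis using e by (simp add: gscale_def sum_distrib_left)
  qed (simp add: gmul_def gscale_def)
qed


typedef gr = Lam by (intro exI[of _ gzero]) simp

lemma Rep_gr_Lam[simp]: "Rep_gr a \<in> Lam" using Rep_gr by blast

instantiation gr :: ring_1
begin
definition "0 = Abs_gr gzero"
definition "1 = Abs_gr gone"
definition "a + b = Abs_gr (gadd (Rep_gr a) (Rep_gr b))"
definition "- a = Abs_gr (gscale (-1) (Rep_gr a))"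
definition "a - b = Abs_gr (gadd (Rep_gr a) (gscale (-1) (Rep_gr b)))"
definition "a * b = Abs_gr (gmul (Rep_gr a) (Rep_gr b))"

lemma Rep_zero[simp]: "Rep_gr 0 = gzero" by (simp add: zero_gr_def Abs_gr_inverse)
lemma Rep_one[simp]: "Rep_gr 1 = gone" by (simp add: one_gr_def Abs_gr_inverse)
lemma Rep_plus[simp]: "Rep_gr (a + b) = gadd (Rep_gr a) (Rep_gr b)" by (simp add: plus_gr_def Abs_gr_inverse)
lemma Rep_uminus[simp]: "Rep_gr (- a) = gscale (-1) (Rep_gr a)" by (simp add: uminus_gr_def Abs_gr_inverse)
lemma Rep_minus[simp]: "Rep_gr (a - b) = gadd (Rep_gr a) (gscale (-1) (Rep_gr b))" by (simp add: minus_gr_def Abs_gr_inverse)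
lemma Rep_times[simp]: "Rep_gr (a * b) = gmul (Rep_gr a) (Rep_gr b)" by (simp add: times_gr_def Abs_gr_inverse)

instance
proof
  fix a b c :: gr
  show "a + b + c = a + (b + c)" by (simp add: Rep_gr_inject[symmetric] gadd_def add.assoc)
  show "a + b = b + a" by (simp add: Rep_gr_inject[symmetric] gadd_def add.commute)
  show "0 + a = a" by (simp add: Rep_gr_inject[symmetric] gadd_def gzero_def)
  show "- a + a = 0" by (simp add: Rep_gr_inject[symmetric] gadd_def gzero_def gscale_def)
  show "a - b = a + - b" by (simp add: Rep_gr_inject[symmetric])
  show "a * b * c = a * (b * c)" by (simp add: Rep_gr_inject[symmetric] gmul_assoc_raw)
  show "1 * a = a" by (simp add: Rep_gr_inject[symmetric] gmul_gone_left)
  show "a * 1 = a" by (simp add: Rep_gr_inject[symmetric] gmul_gone_right)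
  show "(a + b) * c = a * c + b * c" by (simp add: Rep_gr_inject[symmetric] gmul_gadd_left)
  show "a * (b + c) = a * b + a * c" by (simp add: Rep_gr_inject[symmetric] gmul_gadd_right)
  show "(0::gr) \<noteq> 1" by (simp add: Rep_gr_inject[symmetric] gzero_def gone_def fun_eq_iff)
qed
end

lemma Rep_sum: "Rep_gr (sum f A) = gsum (\<lambda>x. Rep_gr (f x)) A"
proof (cases "finite A")
  case True then show ?thesis
    by (induction A rule: finite_induct) (auto simp: gsum_def gadd_def gzero_def)
qed (simp add: gsum_def gzero_def)

lemma gsum_Rep: "gsum (\<lambda>x. Rep_gr (f x)) A = Rep_gr (sum f A)" by (simp add: Rep_sum)

lemma Rep_sum_list: "Rep_gr (sum_list xs) = glsum (map Rep_gr xs)"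
  by (induction xs) (auto simp: glsum_def)

lemma Rep_prod_list: "Rep_gr (prod_list xs) = gprod (map Rep_gr xs)"
  by (induction xs) (auto simp: gprod_def)

lemma Abs_gr_inverse'[simp]: "a \<in> Lam \<Longrightarrow> Rep_gr (Abs_gr a) = a" by (simp add: Abs_gr_inverse)

definition sc :: "complex \<Rightarrow> gr" where "sc c = Abs_gr (gscale c gone)"

lemma Rep_sc: "Rep_gr (sc c) = gscale c gone" by (simp add: sc_def)

lemma sc_mult_left_Rep: "Rep_gr (sc c * a) = gscale c (Rep_gr a)"
  unfolding Rep_times Rep_sc gmul_gscale_left gmul_gone_left[OF Rep_gr_Lam] ..
lemma sc_mult_right_Rep: "Rep_gr (a * sc c) = gscale c (Rep_gr a)"
  unfolding Rep_times Rep_sc gmul_gscale_right gmul_gone_right[OF Rep_gr_Lam] ..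

lemma sc_comm: "sc c * a = a * sc c"
  by (simp add: Rep_gr_inject[symmetric] sc_mult_left_Rep sc_mult_right_Rep del: Rep_times)

lemma sc_mult: "sc (a * b) = sc a * sc b"
  by (simp add: Rep_gr_inject[symmetric] sc_mult_left_Rep del: Rep_times) (simp add: Rep_sc gscale_def mult.assoc)
lemma sc_add: "sc (a + b) = sc a + sc b"
  by (simp add: Rep_gr_inject[symmetric] Rep_sc gscale_def gadd_def algebra_simps)
lemma sc_one[simp]: "sc 1 = 1"
  by (simp add: Rep_gr_inject[symmetric] Rep_sc gscale_def)
lemma sc_zero[simp]: "sc 0 = 0"
  by (simp add: Rep_gr_inject[symmetric] Rep_sc gscale_def gzero_def)
lemma sc_uminus: "sc (- a) = - sc a"
  by (simp add: Rep_gr_inject[symmetric] Rep_sc gscale_def)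
lemma sc_sum: "sc (sum f A) = (\<Sum>x\<in>A. sc (f x))"
  by (induction A rule: infinite_finite_induct) (auto simp: sc_add)
lemma sc_neg1: "sc (-1) = - 1" by (simp add: sc_uminus)
lemma sc_power: "sc (a ^ k) = sc a ^ k"
  by (induction k) (auto simp: sc_mult)

lemma gscale_Rep: "gscale c (Rep_gr a) = Rep_gr (sc c * a)" by (rule sc_mult_left_Rep[symmetric])

definition par :: "bool \<Rightarrow> gr \<Rightarrow> bool" where "par p a = Defs.hom p (Rep_gr a)"

lemma par_zero[simp]: "par p 0" by (simp add: par_def Defs.hom_def gzero_def)
lemma par_one[simp]: "par False 1" by (simp add: par_def Defs.hom_def gone_def)
lemma par_sc[simp]: "par False (sc c)" by (simp add: par_def Defs.hom_def Rep_sc gscale_def gone_def)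
lemma par_add: assumes "par p a" "par p b" shows "par p (a + b)"
  unfolding par_def Defs.hom_def Rep_plus
proof (intro allI impI)
  fix S assume "gadd (Rep_gr a) (Rep_gr b) S \<noteq> 0"
  then have "Rep_gr a S \<noteq> 0 \<or> Rep_gr b S \<noteq> 0" by (auto simp: gadd_def)
  then show "odd (card S) = p" using assms by (auto simp: par_def Defs.hom_def)
qed
lemma par_uminus: "par p a \<Longrightarrow> par p (- a)"
  by (auto simp: par_def Defs.hom_def gscale_def)
lemma par_diff: "par p a \<Longrightarrow> par p b \<Longrightarrow> par p (a - b)"
  using par_add[of p a "- b"] par_uminus[of p b] by simp
lemma par_mult: "par p a \<Longrightarrow> par q b \<Longrightarrow> par (p \<noteq> q) (a * b)"
  unfolding par_def Rep_times by (rule hom_gmul)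
lemma par_sum: "(\<And>x. x \<in> A \<Longrightarrow> par p (f x)) \<Longrightarrow> par p (sum f A)"
  by (induction A rule: infinite_finite_induct) (auto intro: par_add)
lemma par_sc_mult: "par p a \<Longrightarrow> par p (sc c * a)"
  using par_mult[of False "sc c" p a] by simp

lemma supercomm:
  assumes "par p a" "par q b" shows "a * b = sc (if p \<and> q then -1 else 1) * (b * a)"
proof -
  have e: "gmul (Rep_gr a) (Rep_gr b) = gscale (if p \<and> q then -1 else 1) (gmul (Rep_gr b) (Rep_gr a))"
    by (rule gmul_supercomm) (use assms in \<open>auto simp: par_def\<close>)
  show ?thesis unfolding Rep_gr_inject[symmetric] sc_mult_left_Rep by (simp only: Rep_times e)
qed


lemma sc_left_comm: "x * (sc c * y) = sc c * (x * y)"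
  by (metis mult.assoc sc_comm)

lemma sc_pull: "sc a * x * (sc b * y) = sc a * sc b * (x * y)"
  by (simp only: mult.assoc sc_left_comm[of x])

lemma gsum_cong: "(\<And>x. x \<in> K \<Longrightarrow> F x = G x) \<Longrightarrow> gsum F K = gsum G K"
  unfolding gsum_def by (intro ext sum.cong) auto

section \<open>Matrices\<close>

definition toM :: "nat \<Rightarrow> nat \<Rightarrow> Defs.mat \<Rightarrow> gr mat" where
  "toM m n X = mat (m + n) (m + n) (\<lambda>(i, j). Abs_gr (X i j))"
definition ofM :: "nat \<Rightarrow> nat \<Rightarrow> gr mat \<Rightarrow> Defs.mat" where
  "ofM m n A = (\<lambda>i j. if i < m + n \<and> j < m + n then Rep_gr (A $$ (i, j)) else gzero)"
definition evenM :: "nat \<Rightarrow> gr mat \<Rightarrow> bool" where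
  "evenM m A = (\<forall>i<dim_row A. \<forall>j<dim_col A. par (pty m i \<noteq> pty m j) (A $$ (i, j)))"

lemma Emat_Lam: "X \<in> Emat m n \<Longrightarrow> X i j \<in> Lam"
  by (cases "i < m + n \<and> j < m + n") (auto simp: Emat_def)

lemma toM_carrier[simp]: "toM m n X \<in> carrier_mat (m + n) (m + n)"
  by (simp add: toM_def)

lemma ofM_toM: "X \<in> Emat m n \<Longrightarrow> ofM m n (toM m n X) = X"
  by (auto simp: ofM_def toM_def Emat_Lam fun_eq_iff) (auto simp: Emat_def)

lemma toM_ofM: "A \<in> carrier_mat (m + n) (m + n) \<Longrightarrow> toM m n (ofM m n A) = A"
  by (intro eq_matI) (auto simp: ofM_def toM_def Rep_gr_inverse)

lemma evenM_toM: "X \<in> Emat m n \<Longrightarrow> evenM m (toM m n X)"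
  by (auto simp: evenM_def toM_def par_def Emat_Lam) (auto simp: Emat_def)

lemma ofM_Emat: "A \<in> carrier_mat (m + n) (m + n) \<Longrightarrow> evenM m A \<Longrightarrow> ofM m n A \<in> Emat m n"
  by (auto simp: Emat_def ofM_def evenM_def par_def)

lemma ofM_Emat_iff: "A \<in> carrier_mat (m + n) (m + n) \<Longrightarrow> ofM m n A \<in> Emat m n \<longleftrightarrow> evenM m A"
  using evenM_toM[of "ofM m n A" m n] toM_ofM[of A m n] ofM_Emat by auto

lemma mmul_ofM:
  assumes "A \<in> carrier_mat (m + n) (m + n)" "B \<in> carrier_mat (m + n) (m + n)"
  shows "mmul m n (ofM m n A) (ofM m n B) = ofM m n (A * B)"
proof (rule ext, rule ext)
  fix i j show "mmul m n (ofM m n A) (ofM m n B) i j = ofM m n (A * B) i j"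
  proof (cases "i < m + n \<and> j < m + n")
    case True
    have "mmul m n (ofM m n A) (ofM m n B) i j = gsum (\<lambda>k. Rep_gr (A $$ (i, k) * B $$ (k, j))) {..<m + n}"
      unfolding mmul_def using True by (auto simp: ofM_def intro: gsum_cong)
    also have "\<dots> = Rep_gr (\<Sum>k<m + n. A $$ (i, k) * B $$ (k, j))" by (rule gsum_Rep)
    also have "\<dots> = ofM m n (A * B) i j"
      using True assms by (simp add: ofM_def scalar_prod_def atLeast0LessThan)
    finally show ?thesis .
  qed (auto simp: mmul_def ofM_def)
qed

lemma mone_ofM: "mone m n = ofM m n (1\<^sub>m (m + n))"
  by (auto simp: mone_def ofM_def fun_eq_iff gzero_def)

lemma evenM_one: "evenM m (1\<^sub>m k)"
  by (auto simp: evenM_def)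

lemma par_cong: "par p a \<Longrightarrow> p = q \<Longrightarrow> par q a" by simp

lemma evenM_mult:
  assumes "A \<in> carrier_mat k k" "B \<in> carrier_mat k k" "evenM m A" "evenM m B"
  shows "evenM m (A * B)"
  unfolding evenM_def
proof (intro allI impI)
  fix i j assume ij: "i < dim_row (A * B)" "j < dim_col (A * B)"
  have "(A * B) $$ (i, j) = (\<Sum>l\<in>{0..<k}. A $$ (i, l) * B $$ (l, j))"
    using ij assms by (simp add: scalar_prod_def)
  moreover have "par (pty m i \<noteq> pty m j) (\<Sum>l\<in>{0..<k}. A $$ (i, l) * B $$ (l, j))"
  proof (rule par_sum)
    fix l assume "l \<in> {0..<k}"
    then have "par ((pty m i \<noteq> pty m l) \<noteq> (pty m l \<noteq> pty m j)) (A $$ (i, l) * B $$ (l, j))"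
      using assms ij by (intro par_mult) (auto simp: evenM_def)
    then show "par (pty m i \<noteq> pty m j) (A $$ (i, l) * B $$ (l, j))" by (rule par_cong) auto
  qed
  ultimately show "par (pty m i \<noteq> pty m j) ((A * B) $$ (i, j))" by simp
qed

lemma evenM_add: "A \<in> carrier_mat k k \<Longrightarrow> B \<in> carrier_mat k k \<Longrightarrow> evenM m A \<Longrightarrow> evenM m B \<Longrightarrow> evenM m (A + B)"
  by (auto simp: evenM_def intro: par_add)
lemma evenM_minus: "A \<in> carrier_mat k k \<Longrightarrow> B \<in> carrier_mat k k \<Longrightarrow> evenM m A \<Longrightarrow> evenM m B \<Longrightarrow> evenM m (A - B)"
  by (auto simp: evenM_def intro: par_diff)
lemma evenM_uminus: "A \<in> carrier_mat k k \<Longrightarrow> evenM m A \<Longrightarrow> evenM m (- A)"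
  by (auto simp: evenM_def intro: par_uminus)
lemma evenM_zero: "evenM m (0\<^sub>m k k)"
  by (auto simp: evenM_def)
lemma evenM_pow: "A \<in> carrier_mat k k \<Longrightarrow> evenM m A \<Longrightarrow> evenM m (A ^\<^sub>m l)"
  apply (induction l)
   apply (simp add: evenM_one)
  apply simp
  apply (rule evenM_mult)
     apply auto
  done

lemma finite_Idx[simp]: "finite (Idx m n r)"
proof -
  have "Idx m n r \<subseteq> {xs. set xs \<subseteq> {..<m + n} \<and> length xs = r}" by (auto simp: Idx_def)
  then show ?thesis by (rule finite_subset) (rule finite_lists_length_eq, simp)
qed

lemma Idx_0[simp]: "Idx m n 0 = {[]}" by (auto simp: Idx_def)

lemma Idx_Suc: "Idx m n (Suc r) = (\<lambda>(k, K). k # K) ` ({..<m + n} \<times> Idx m n r)"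
proof
  show "Idx m n (Suc r) \<subseteq> (\<lambda>(k, K). k # K) ` ({..<m + n} \<times> Idx m n r)"
  proof
    fix J assume "J \<in> Idx m n (Suc r)"
    then obtain k K where "J = k # K" "k < m + n" "K \<in> Idx m n r"
      by (cases J) (auto simp: Idx_def)
    then show "J \<in> (\<lambda>(k, K). k # K) ` ({..<m + n} \<times> Idx m n r)" by force
  qed
qed (auto simp: Idx_def)

lemma Idx_Cons_iff: "k # K \<in> Idx m n (Suc r) \<longleftrightarrow> k < m + n \<and> K \<in> Idx m n r"
  by (auto simp: Idx_def)

lemma sum_Idx_Suc:
  "(\<Sum>K\<in>Idx m n (Suc r). f K) = (\<Sum>k<m + n. \<Sum>K\<in>Idx m n r. f (k # K))"
proof -
  have "(\<Sum>K\<in>Idx m n (Suc r). f K) = (\<Sum>p\<in>{..<m + n} \<times> Idx m n r. f (case p of (k, K) \<Rightarrow> k # K))"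
    unfolding Idx_Suc by (subst sum.reindex) (auto simp: inj_on_def)
  also have "\<dots> = (\<Sum>k<m + n. \<Sum>K\<in>Idx m n r. f (k # K))"
    by (subst sum.cartesian_product) (rule sum.cong, auto)
  finally show ?thesis .
qed

definition cntb :: "nat \<Rightarrow> nat list \<Rightarrow> nat \<Rightarrow> nat" where
  "cntb m J r = card {b. b < r \<and> pty m (J ! b)}"

lemma cntb_0[simp]: "cntb m J 0 = 0" by (simp add: cntb_def)

lemma cntb_Cons: "cntb m (j # J) (Suc r) = (if pty m j then 1 else 0) + cntb m J r"
proof -
  have e: "{b. b < Suc r \<and> pty m ((j # J) ! b)} = (if pty m j then {0} else {}) \<union> Suc ` {b. b < r \<and> pty m (J ! b)}"
    by (auto simp: less_Suc_eq_0_disj)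
  show ?thesis unfolding cntb_def e
    by (subst card_Un_disjoint) (auto simp: card_image)
qed

lemma tsign_0[simp]: "tsign m 0 J I = 1" by (simp add: tsign_def)

lemma tsign_Cons:
  "tsign m (Suc r) (j # J) (i # I) =
    (if pty m j \<noteq> pty m i \<and> odd (cntb m J r) then -1 else 1) * tsign m r J I"
proof -
  let ?S = "{(a, b). a < b \<and> b < r \<and> (pty m (J ! a) \<noteq> pty m (I ! a)) \<and> pty m (J ! b)}"
  let ?B = "{b. b < r \<and> pty m (J ! b)}"
  have e: "{(a, b). a < b \<and> b < Suc r \<and> (pty m ((j # J) ! a) \<noteq> pty m ((i # I) ! a)) \<and> pty m ((j # J) ! b)}
    = (if pty m j \<noteq> pty m i then (\<lambda>b. (0, Suc b)) ` ?B else {}) \<union> (\<lambda>(a, b). (Suc a, Suc b)) ` ?S"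
    (is "?L = ?R")
  proof
    show "?L \<subseteq> ?R"
    proof
      fix p assume "p \<in> ?L"
      then obtain a b where p: "p = (a, b)" "a < b" "b < Suc r" "pty m ((j # J) ! a) \<noteq> pty m ((i # I) ! a)"
        "pty m ((j # J) ! b)" by auto
      then obtain b' where b': "b = Suc b'" by (cases b) auto
      show "p \<in> ?R"
      proof (cases a)
        case 0 then show ?thesis using p b' by auto
      next
        case (Suc a') then show ?thesis using p b' by (auto intro!: image_eqI[of _ _ "(a', b')"])
      qed
    qed
    show "?R \<subseteq> ?L" by (auto split: if_splits)
  qed
  have fS: "finite ?S" by (rule finite_subset[of _ "{..<r} \<times> {..<r}"]) auto
  have fB: "finite ?B" by (rule finite_subset[of _ "{..<r}"]) auto
  let ?A0 = "(if pty m j \<noteq> pty m i then (\<lambda>b. (0::nat, Suc b)) ` ?B else {})"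
  let ?A1 = "(\<lambda>(a, b). (Suc a, Suc b)) ` ?S"
  have c0: "card ?A0 = (if pty m j \<noteq> pty m i then cntb m J r else 0)"
    by (auto simp: card_image inj_on_def cntb_def)
  have c1: "card ?A1 = card ?S"
    by (rule card_image) (auto simp: inj_on_def)
  have "card (?A0 \<union> ?A1) = card ?A0 + card ?A1"
    using fS fB by (intro card_Un_disjoint) auto
  then have c: "card ?L = (if pty m j \<noteq> pty m i then cntb m J r else 0) + card ?S"
    unfolding e c0 c1 .
  show ?thesis unfolding tsign_def c by (auto simp: power_add)
qed

definition coef :: "nat \<Rightarrow> nat \<Rightarrow> gr mat \<Rightarrow> nat list \<Rightarrow> nat list \<Rightarrow> gr" where
  "coef m r A J I = sc (tsign m r J I) * prod_list (map (\<lambda>a. A $$ (J ! a, I ! a)) [0..<r])"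

lemma map_upt_Suc_Cons: "map (\<lambda>a. f ((j # J) ! a) ((i # I) ! a)) [0..<Suc r] = f j i # map (\<lambda>a. f (J ! a) (I ! a)) [0..<r]"
  by (simp add: upt_conv_Cons map_Suc_upt[symmetric] del: upt_Suc)

lemma coef_0[simp]: "coef m 0 A J I = 1" by (simp add: coef_def)

lemma coef_Cons:
  "coef m (Suc r) A (j # J) (i # I) =
    sc (if pty m j \<noteq> pty m i \<and> odd (cntb m J r) then -1 else 1) * (A $$ (j, i) * coef m r A J I)"
  unfolding coef_def tsign_Cons sc_mult map_upt_Suc_Cons[of "\<lambda>x y. A $$ (x, y)"]
  by (simp only: prod_list.Cons mult.assoc sc_left_comm[of "A $$ (j, i)"])

lemma par_coef:
  assumes "A \<in> carrier_mat (m + n) (m + n)" "evenM m A"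
  shows "J \<in> Idx m n r \<Longrightarrow> I \<in> Idx m n r \<Longrightarrow> par (odd (cntb m J r) \<noteq> odd (cntb m I r)) (coef m r A J I)"
proof (induction r arbitrary: J I)
  case 0 then show ?case by simp
next
  case (Suc r)
  obtain j J' where J: "J = j # J'" "j < m + n" "J' \<in> Idx m n r" using Suc.prems(1) unfolding Idx_Suc by auto
  obtain i I' where I: "I = i # I'" "i < m + n" "I' \<in> Idx m n r" using Suc.prems(2) unfolding Idx_Suc by auto
  have pA: "par (pty m j \<noteq> pty m i) (A $$ (j, i))" using assms J I by (auto simp: evenM_def)
  have "par ((pty m j \<noteq> pty m i) \<noteq> (odd (cntb m J' r) \<noteq> odd (cntb m I' r))) (A $$ (j, i) * coef m r A J' I')"
    by (rule par_mult[OF pA Suc.IH[OF J(3) I(3)]])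
  then have "par ((pty m j \<noteq> pty m i) \<noteq> (odd (cntb m J' r) \<noteq> odd (cntb m I' r))) (coef m (Suc r) A J I)"
    unfolding J(1) I(1) coef_Cons by (rule par_sc_mult)
  then show ?case unfolding J(1) I(1) cntb_Cons by (rule par_cong) auto
qed

lemma coef_comp:
  assumes A: "A \<in> carrier_mat (m + n) (m + n)" "evenM m A"
    and B: "B \<in> carrier_mat (m + n) (m + n)" "evenM m B"
  shows "J \<in> Idx m n r \<Longrightarrow> I \<in> Idx m n r \<Longrightarrow>
    (\<Sum>K\<in>Idx m n r. coef m r A J K * coef m r B K I) = coef m r (A * B) J I"
proof (induction r arbitrary: J I)
  case 0 then show ?case by simp
next
  case (Suc r)
  obtain j J' where J: "J = j # J'" "j < m + n" "J' \<in> Idx m n r" using Suc.prems(1) unfolding Idx_Suc by auto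
  obtain i I' where I: "I = i # I'" "i < m + n" "I' \<in> Idx m n r" using Suc.prems(2) unfolding Idx_Suc by auto
  define s where "s = (if pty m j \<noteq> pty m i \<and> odd (cntb m J' r) then -1 else (1::complex))"
  have tm: "coef m (Suc r) A (j # J') (k # K') * coef m (Suc r) B (k # K') (i # I')
      = sc s * ((A $$ (j, k) * B $$ (k, i)) * (coef m r A J' K' * coef m r B K' I'))"
    if k: "k < m + n" and K': "K' \<in> Idx m n r" for k K'
  proof -
    define sa where "sa = (if pty m j \<noteq> pty m k \<and> odd (cntb m J' r) then -1 else (1::complex))"
    define sb where "sb = (if pty m k \<noteq> pty m i \<and> odd (cntb m K' r) then -1 else (1::complex))"
    define sw where "sw = (if (pty m k \<noteq> pty m i) \<and> (odd (cntb m J' r) \<noteq> odd (cntb m K' r)) then -1 else (1::complex))"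
    have pB: "par (pty m k \<noteq> pty m i) (B $$ (k, i))" using B k I by (auto simp: evenM_def)
    have pC: "par (odd (cntb m J' r) \<noteq> odd (cntb m K' r)) (coef m r A J' K')"
      by (rule par_coef[OF A J(3) K'])
    have swap: "coef m r A J' K' * B $$ (k, i) = sc sw * (B $$ (k, i) * coef m r A J' K')"
      unfolding sw_def using supercomm[OF pC pB] by (simp add: conj_commute)
    have sgn: "sa * sb * sw = s"
      unfolding sa_def sb_def sw_def s_def by auto
    have "coef m (Suc r) A (j # J') (k # K') * coef m (Suc r) B (k # K') (i # I')
      = sc sa * (A $$ (j, k) * coef m r A J' K') * (sc sb * (B $$ (k, i) * coef m r B K' I'))"
      unfolding coef_Cons sa_def sb_def ..
    also have "\<dots> = sc sa * sc sb * (A $$ (j, k) * (coef m r A J' K' * B $$ (k, i)) * coef m r B K' I')"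
      by (simp only: mult.assoc sc_left_comm[of "coef m r A J' K'"] sc_left_comm[of "A $$ (j, k)"])
    also have "\<dots> = sc sa * sc sb * sc sw * (A $$ (j, k) * B $$ (k, i) * coef m r A J' K' * coef m r B K' I')"
      unfolding swap by (simp only: sc_left_comm[of "A $$ (j, k)"] mult.assoc)
    also have "\<dots> = sc s * ((A $$ (j, k) * B $$ (k, i)) * (coef m r A J' K' * coef m r B K' I'))"
      unfolding sgn[symmetric] sc_mult by (simp add: mult.assoc)
    finally show ?thesis .
  qed
  have "(\<Sum>K\<in>Idx m n (Suc r). coef m (Suc r) A J K * coef m (Suc r) B K I)
      = (\<Sum>k<m + n. \<Sum>K'\<in>Idx m n r. sc s * ((A $$ (j, k) * B $$ (k, i)) * (coef m r A J' K' * coef m r B K' I')))"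
    unfolding sum_Idx_Suc J(1) I(1) by (intro sum.cong refl) (simp add: tm)
  also have "\<dots> = sc s * ((\<Sum>k<m + n. A $$ (j, k) * B $$ (k, i)) * (\<Sum>K'\<in>Idx m n r. coef m r A J' K' * coef m r B K' I'))"
    by (subst sum_product) (simp only: sum_distrib_left)
  also have "\<dots> = sc s * ((A * B) $$ (j, i) * coef m r (A * B) J' I')"
    using Suc.IH[OF J(3) I(3)] A B J I by (simp add: scalar_prod_def atLeast0LessThan)
  also have "\<dots> = coef m (Suc r) (A * B) J I"
    unfolding J(1) I(1) coef_Cons s_def ..
  finally show ?case .
qed

lemma coef_one:
  "J \<in> Idx m n r \<Longrightarrow> I \<in> Idx m n r \<Longrightarrow> coef m r (1\<^sub>m (m + n)) J I = (if J = I then 1 else 0)"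
proof (induction r arbitrary: J I)
  case 0 then show ?case by simp
next
  case (Suc r)
  obtain j J' where J: "J = j # J'" "j < m + n" "J' \<in> Idx m n r" using Suc.prems(1) unfolding Idx_Suc by auto
  obtain i I' where I: "I = i # I'" "i < m + n" "I' \<in> Idx m n r" using Suc.prems(2) unfolding Idx_Suc by auto
  show ?case unfolding J(1) I(1) coef_Cons using J I Suc.IH[OF J(3) I(3)] by auto
qed


section \<open>Tensors\<close>

definition ofV :: "nat \<Rightarrow> nat \<Rightarrow> nat \<Rightarrow> (nat list \<Rightarrow> gr) \<Rightarrow> tvec" where
  "ofV m n r v = (\<lambda>I. if I \<in> Idx m n r then Rep_gr (v I) else gzero)"
definition toV :: "tvec \<Rightarrow> nat list \<Rightarrow> gr" where
  "toV w = (\<lambda>I. Abs_gr (w I))"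
definition tactT :: "nat \<Rightarrow> nat \<Rightarrow> nat \<Rightarrow> gr mat \<Rightarrow> (nat list \<Rightarrow> gr) \<Rightarrow> nat list \<Rightarrow> gr" where
  "tactT m n r A v = (\<lambda>J. \<Sum>I\<in>Idx m n r. coef m r A J I * v I)"

lemma TrV_Lam: "w \<in> TrV m n r \<Longrightarrow> w I \<in> Lam"
  by (cases "I \<in> Idx m n r") (auto simp: TrV_def)

lemma ofV_toV: "w \<in> TrV m n r \<Longrightarrow> ofV m n r (toV w) = w"
  by (auto simp: ofV_def toV_def TrV_Lam fun_eq_iff) (auto simp: TrV_def)

lemma ofV_TrV[simp]: "ofV m n r v \<in> TrV m n r"
  by (auto simp: ofV_def TrV_def)

lemma ofV_eq: "(\<And>I. I \<in> Idx m n r \<Longrightarrow> v I = v' I) \<Longrightarrow> ofV m n r v = ofV m n r v'"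
  by (auto simp: ofV_def fun_eq_iff)

lemma ofV_inj: assumes "ofV m n r v = ofV m n r v'" "I \<in> Idx m n r" shows "v I = v' I"
proof -
  have "ofV m n r v I = ofV m n r v' I" using assms by simp
  then show ?thesis using assms by (simp add: ofV_def Rep_gr_inject)
qed

lemma Idx_nth_less: "I \<in> Idx m n r \<Longrightarrow> a < r \<Longrightarrow> I ! a < m + n"
  by (auto simp: Idx_def) (meson lessThan_iff nth_mem subsetD)

lemma Idx_length: "I \<in> Idx m n r \<Longrightarrow> length I = r"
  by (auto simp: Idx_def)

lemma tact_ofM:
  assumes A: "A \<in> carrier_mat (m + n) (m + n)"
  shows "tact m n r (ofM m n A) (ofV m n r v) = ofV m n r (tactT m n r A v)"
proof
  fix J show "tact m n r (ofM m n A) (ofV m n r v) J = ofV m n r (tactT m n r A v) J"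
  proof (cases "J \<in> Idx m n r")
    case J: True
    have key: "gscale (tsign m r J I) (gmul (gprod (map (\<lambda>a. ofM m n A (J ! a) (I ! a)) [0..<r])) (ofV m n r v I))
         = Rep_gr (coef m r A J I * v I)" if I: "I \<in> Idx m n r" for I
    proof -
      have mapeq: "map (\<lambda>a. ofM m n A (J ! a) (I ! a)) [0..<r] = map Rep_gr (map (\<lambda>a. A $$ (J ! a, I ! a)) [0..<r])"
        using I J by (auto simp: ofM_def Idx_nth_less)
      have gp: "gprod (map (\<lambda>a. ofM m n A (J ! a) (I ! a)) [0..<r]) = Rep_gr (prod_list (map (\<lambda>a. A $$ (J ! a, I ! a)) [0..<r]))"
        by (simp only: mapeq Rep_prod_list)
      have ov: "ofV m n r v I = Rep_gr (v I)" using I by (simp add: ofV_def)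
      show ?thesis
        unfolding gp ov coef_def mult.assoc by (simp only: Rep_times[symmetric] gscale_Rep)
    qed
    have "tact m n r (ofM m n A) (ofV m n r v) J =
      gsum (\<lambda>I. Rep_gr (coef m r A J I * v I)) (Idx m n r)"
      unfolding tact_def if_P[OF J] by (rule gsum_cong) (rule key)
    also have "\<dots> = Rep_gr (tactT m n r A v J)" unfolding tactT_def by (rule gsum_Rep)
    finally show ?thesis using J by (simp add: ofV_def)
  qed (simp add: tact_def ofV_def)
qed

lemma tactT_comp:
  assumes "A \<in> carrier_mat (m + n) (m + n)" "evenM m A" "B \<in> carrier_mat (m + n) (m + n)" "evenM m B"
    and J: "J \<in> Idx m n r"
  shows "tactT m n r A (tactT m n r B v) J = tactT m n r (A * B) v J"
proof -
  have "tactT m n r A (tactT m n r B v) J = (\<Sum>K\<in>Idx m n r. \<Sum>I\<in>Idx m n r. coef m r A J K * coef m r B K I * v I)"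
    by (simp add: tactT_def sum_distrib_left mult.assoc)
  also have "\<dots> = (\<Sum>I\<in>Idx m n r. (\<Sum>K\<in>Idx m n r. coef m r A J K * coef m r B K I) * v I)"
    by (subst sum.swap) (simp add: sum_distrib_right)
  also have "\<dots> = tactT m n r (A * B) v J"
    unfolding tactT_def by (intro sum.cong refl) (simp add: coef_comp[OF assms(1-4) J])
  finally show ?thesis .
qed

lemma tactT_one:
  assumes J: "J \<in> Idx m n r" shows "tactT m n r (1\<^sub>m (m + n)) v J = v J"
proof -
  have "tactT m n r (1\<^sub>m (m + n)) v J = (\<Sum>I\<in>Idx m n r. if J = I then v I else 0)"
    unfolding tactT_def by (rule sum.cong) (auto simp: coef_one J)
  also have "\<dots> = v J" using J by (simp add: sum.delta)
  finally show ?thesis .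
qed

lemma dim_toM[simp]: "dim_row (toM m n X) = m + n" "dim_col (toM m n X) = m + n"
  by (simp_all add: toM_def)

lemma mult_carrier_sq[simp]: "A \<in> carrier_mat k k \<Longrightarrow> B \<in> carrier_mat k k \<Longrightarrow> A * B \<in> carrier_mat k k"
  by (rule mult_carrier_mat)

lemma Emat_ofM_toM: "X \<in> Emat m n \<Longrightarrow> X = ofM m n (toM m n X)" by (simp add: ofM_toM)
lemma TrV_ofV_toV: "w \<in> TrV m n r \<Longrightarrow> w = ofV m n r (toV w)" by (simp add: ofV_toV)

lemma tact_TrV: "X \<in> Emat m n \<Longrightarrow> w \<in> TrV m n r \<Longrightarrow> tact m n r X w \<in> TrV m n r"
  by (subst Emat_ofM_toM, assumption, subst TrV_ofV_toV, assumption, simp add: tact_ofM)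

lemma tact_toM: "X \<in> Emat m n \<Longrightarrow> w \<in> TrV m n r \<Longrightarrow>
   tact m n r X w = ofV m n r (tactT m n r (toM m n X) (toV w))"
  by (subst Emat_ofM_toM, assumption, subst TrV_ofV_toV, assumption, simp add: tact_ofM)

lemma mone_Emat: "mone m n \<in> Emat m n"
  unfolding mone_ofM by (rule ofM_Emat) (auto simp: evenM_one)

lemma toM_mone: "toM m n (mone m n) = 1\<^sub>m (m + n)"
  unfolding mone_ofM by (simp add: toM_ofM)

lemma tact_mone: assumes "w \<in> TrV m n r" shows "tact m n r (mone m n) w = w"
proof -
  have "tact m n r (mone m n) w = ofV m n r (tactT m n r (1\<^sub>m (m + n)) (toV w))"
    using assms by (simp add: tact_toM mone_Emat toM_mone)
  also have "\<dots> = ofV m n r (toV w)" by (rule ofV_eq) (simp add: tactT_one)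
  also have "\<dots> = w" using assms by (simp add: ofV_toV)
  finally show ?thesis .
qed

lemma mmul_toM: "X \<in> Emat m n \<Longrightarrow> Y \<in> Emat m n \<Longrightarrow> mmul m n X Y = ofM m n (toM m n X * toM m n Y)"
  by (subst (1 2) Emat_ofM_toM, assumption+) (simp add: mmul_ofM)

lemma mmul_Emat: "X \<in> Emat m n \<Longrightarrow> Y \<in> Emat m n \<Longrightarrow> mmul m n X Y \<in> Emat m n"
  apply (simp add: mmul_toM)
  apply (rule ofM_Emat)
   apply simp
  apply (rule evenM_mult)
     apply (auto simp: evenM_toM)
  done

lemma toM_mmul: "X \<in> Emat m n \<Longrightarrow> Y \<in> Emat m n \<Longrightarrow> toM m n (mmul m n X Y) = toM m n X * toM m n Y"
  by (simp add: mmul_toM toM_ofM)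

lemma mmul_assoc: "X \<in> Emat m n \<Longrightarrow> Y \<in> Emat m n \<Longrightarrow> Z \<in> Emat m n \<Longrightarrow>
  mmul m n (mmul m n X Y) Z = mmul m n X (mmul m n Y Z)"
  using mmul_toM[of "mmul m n X Y" m n Z] mmul_toM[of X m n "mmul m n Y Z"]
    assoc_mult_mat[OF toM_carrier[of m n X] toM_carrier[of m n Y] toM_carrier[of m n Z]]
  by (simp add: mmul_Emat toM_mmul)

lemma mmul_mone_left: "X \<in> Emat m n \<Longrightarrow> mmul m n (mone m n) X = X"
  by (simp add: mmul_toM mone_Emat toM_mone ofM_toM)
lemma mmul_mone_right: "X \<in> Emat m n \<Longrightarrow> mmul m n X (mone m n) = X"
  by (simp add: mmul_toM mone_Emat toM_mone ofM_toM)

lemma tact_comp: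
  assumes X: "X \<in> Emat m n" and Y: "Y \<in> Emat m n" and w: "w \<in> TrV m n r"
  shows "tact m n r X (tact m n r Y w) = tact m n r (mmul m n X Y) w"
proof -
  define u where "u = tactT m n r (toM m n Y) (toV w)"
  have "tact m n r X (tact m n r Y w) = tact m n r (ofM m n (toM m n X)) (ofV m n r u)"
    using X Y w by (simp add: tact_toM u_def ofM_toM)
  also have "\<dots> = ofV m n r (tactT m n r (toM m n X) u)" by (simp add: tact_ofM)
  also have "\<dots> = ofV m n r (tactT m n r (toM m n X * toM m n Y) (toV w))"
    unfolding u_def by (rule ofV_eq, rule tactT_comp) (auto simp: evenM_toM X Y)
  also have "\<dots> = tact m n r (mmul m n X Y) w"
    using X Y w by (simp add: tact_toM mmul_Emat toM_mmul)
  finally show ?thesis .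
qed

lemma GLV_ginv:
  assumes "g \<in> GLV m n"
  shows "ginv m n g \<in> Emat m n" "mmul m n g (ginv m n g) = mone m n" "mmul m n (ginv m n g) g = mone m n"
proof -
  have "\<exists>h. h \<in> Emat m n \<and> mmul m n g h = mone m n \<and> mmul m n h g = mone m n"
    using assms by (auto simp: GLV_def)
  then have "ginv m n g \<in> Emat m n \<and> mmul m n g (ginv m n g) = mone m n \<and> mmul m n (ginv m n g) g = mone m n"
    unfolding ginv_def by (rule someI_ex)
  then show "ginv m n g \<in> Emat m n" "mmul m n g (ginv m n g) = mone m n" "mmul m n (ginv m n g) g = mone m n"
    by auto
qed

lemma GLV_Emat: "g \<in> GLV m n \<Longrightarrow> g \<in> Emat m n" by (simp add: GLV_def)

lemma ginv_GLV: "g \<in> GLV m n \<Longrightarrow> ginv m n g \<in> GLV m n"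
  using GLV_ginv[of g m n] GLV_Emat[of g m n] unfolding GLV_def by blast

lemma inverse_unique:
  assumes "g \<in> Emat m n" "h \<in> Emat m n" "h' \<in> Emat m n"
    "mmul m n g h = mone m n" "mmul m n h' g = mone m n"
  shows "h = h'"
proof -
  have "h = mmul m n (mmul m n h' g) h" using assms by (simp add: mmul_mone_left)
  also have "\<dots> = mmul m n h' (mmul m n g h)" by (rule mmul_assoc) (use assms in auto)
  also have "\<dots> = h'" using assms by (simp add: mmul_mone_right)
  finally show ?thesis .
qed

lemma ginv_ginv: "g \<in> GLV m n \<Longrightarrow> ginv m n (ginv m n g) = g"
  using inverse_unique[of "ginv m n g" m n "ginv m n (ginv m n g)" g]
    GLV_ginv[of g] GLV_ginv[OF ginv_GLV, of g] GLV_Emat[of g] by auto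


definition Lt :: "nat \<Rightarrow> nat \<Rightarrow> nat \<Rightarrow> tdual \<Rightarrow> (nat list \<Rightarrow> gr) \<Rightarrow> gr" where
  "Lt m n r L v = Abs_gr (L (ofV m n r v))"

definition eb :: "nat list \<Rightarrow> nat list \<Rightarrow> gr" where
  "eb J = (\<lambda>K. if K = J then 1 else 0)"

lemma TrVd_Lam: "L \<in> TrVd m n r \<Longrightarrow> w \<in> TrV m n r \<Longrightarrow> L w \<in> Lam"
  by (auto simp: TrVd_def)

lemma Rep_Lt: "L \<in> TrVd m n r \<Longrightarrow> Rep_gr (Lt m n r L v) = L (ofV m n r v)"
  by (simp add: Lt_def TrVd_Lam)

lemma tadd_TrV: "w \<in> TrV m n r \<Longrightarrow> w' \<in> TrV m n r \<Longrightarrow> tadd w w' \<in> TrV m n r"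
  unfolding TrV_def tadd_def by (auto simp: Lam_gadd) (auto simp: gadd_def gzero_def)

lemma trmul_TrV: "w \<in> TrV m n r \<Longrightarrow> c \<in> Lam \<Longrightarrow> trmul w c \<in> TrV m n r"
  by (auto simp: TrV_def trmul_def gmul_gzero_left)

lemma Lt_add:
  assumes L: "L \<in> TrVd m n r"
  shows "Lt m n r L (\<lambda>I. v I + v' I) = Lt m n r L v + Lt m n r L v'"
proof -
  have e: "ofV m n r (\<lambda>I. v I + v' I) = tadd (ofV m n r v) (ofV m n r v')"
    by (auto simp: ofV_def tadd_def fun_eq_iff gadd_def gzero_def)
  show ?thesis
    unfolding Rep_gr_inject[symmetric] Rep_plus Rep_Lt[OF L] e using L by (simp add: TrVd_def)
qed

lemma Lt_rmul:
  assumes L: "L \<in> TrVd m n r"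
  shows "Lt m n r L (\<lambda>I. v I * c) = Lt m n r L v * c"
proof -
  have e: "ofV m n r (\<lambda>I. v I * c) = trmul (ofV m n r v) (Rep_gr c)"
    by (auto simp: ofV_def trmul_def fun_eq_iff gmul_gzero_left)
  show ?thesis
    unfolding Rep_gr_inject[symmetric] Rep_times Rep_Lt[OF L] e using L by (simp add: TrVd_def)
qed

lemma Lt_zero:
  assumes L: "L \<in> TrVd m n r"
  shows "Lt m n r L (\<lambda>I. 0) = 0"
  using Lt_add[OF L, of "\<lambda>I. 0" "\<lambda>I. 0"] by simp

lemma Lt_sum:
  assumes L: "L \<in> TrVd m n r" and F: "finite F"
  shows "Lt m n r L (\<lambda>I. \<Sum>x\<in>F. f x I) = (\<Sum>x\<in>F. Lt m n r L (f x))"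
  using F
proof (induction F rule: finite_induct)
  case empty then show ?case using Lt_zero[OF L] by simp
next
  case (insert x F)
  then show ?case using Lt_add[OF L, of "f x" "\<lambda>I. \<Sum>x\<in>F. f x I"] by simp
qed

lemma Lt_cong: "(\<And>I. I \<in> Idx m n r \<Longrightarrow> v I = v' I) \<Longrightarrow> Lt m n r L v = Lt m n r L v'"
  unfolding Lt_def by (simp add: ofV_eq[of m n r v v'])

lemma Lt_expand:
  assumes L: "L \<in> TrVd m n r"
  shows "Lt m n r L v = (\<Sum>J\<in>Idx m n r. Lt m n r L (eb J) * v J)"
proof -
  have "Lt m n r L v = Lt m n r L (\<lambda>K. \<Sum>J\<in>Idx m n r. eb J K * v J)"
  proof (rule Lt_cong)
    fix I assume I: "I \<in> Idx m n r"
    have "(\<Sum>J\<in>Idx m n r. eb J I * v J) = (\<Sum>J\<in>Idx m n r. if I = J then v J else 0)"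
      by (rule sum.cong) (auto simp: eb_def)
    also have "\<dots> = v I" using I by (simp add: sum.delta)
    finally show "v I = (\<Sum>J\<in>Idx m n r. eb J I * v J)" by simp
  qed
  also have "\<dots> = (\<Sum>J\<in>Idx m n r. Lt m n r L (\<lambda>K. eb J K * v J))"
    by (rule Lt_sum[OF L]) simp
  also have "\<dots> = (\<Sum>J\<in>Idx m n r. Lt m n r L (eb J) * v J)"
    by (rule sum.cong) (auto simp: Lt_rmul[OF L])
  finally show ?thesis .
qed

lemma L_tact:
  assumes L: "L \<in> TrVd m n r" and X: "X \<in> Emat m n" and w: "w \<in> TrV m n r"
  shows "L (tact m n r X w) = Rep_gr (\<Sum>J\<in>Idx m n r. \<Sum>I\<in>Idx m n r.
            Lt m n r L (eb J) * coef m r (toM m n X) J I * toV w I)"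
proof -
  have "L (tact m n r X w) = Rep_gr (Lt m n r L (tactT m n r (toM m n X) (toV w)))"
    using X w by (simp add: tact_toM Rep_Lt[OF L])
  also have "Lt m n r L (tactT m n r (toM m n X) (toV w)) =
     (\<Sum>J\<in>Idx m n r. \<Sum>I\<in>Idx m n r. Lt m n r L (eb J) * coef m r (toM m n X) J I * toV w I)"
    by (subst Lt_expand[OF L]) (simp add: tactT_def sum_distrib_left mult.assoc)
  finally show ?thesis .
qed

definition cJI :: "nat \<Rightarrow> nat \<Rightarrow> nat \<Rightarrow> tdual \<Rightarrow> nat list \<Rightarrow> nat list \<Rightarrow> grass" where
  "cJI m n r L J I = gscale (tsign m r J I) (L (ofV m n r (eb J)))"

definition fP :: "nat \<Rightarrow> nat \<Rightarrow> nat \<Rightarrow> tdual \<Rightarrow> nat list \<Rightarrow> nat list \<Rightarrow> Defs.mat \<Rightarrow> grass" where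
  "fP m n r L J I = (\<lambda>X. if X \<in> Emat m n then
      glsum (map (\<lambda>(c, ks). gmul c (gprod (map (\<lambda>(i, j). X i j) ks))) [(cJI m n r L J I, zip J I)])
    else gzero)"

definition LP :: "nat \<Rightarrow> nat \<Rightarrow> nat \<Rightarrow> nat list \<Rightarrow> tdual" where
  "LP m n r I = (\<lambda>w. if w \<in> TrV m n r then w I else gzero)"

lemma LP_TrVd: "LP m n r I \<in> TrVd m n r"
  unfolding TrVd_def LP_def
  by (auto simp: TrV_Lam tadd_TrV trmul_TrV) (auto simp: tadd_def trmul_def)

lemma fP_Pr:
  assumes L: "L \<in> TrVd m n r" and J: "J \<in> Idx m n r" and I: "I \<in> Idx m n r"
  shows "fP m n r L J I \<in> Pr m n r"
  unfolding Pr_def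
proof (intro CollectI conjI allI impI exI[of _ "[(cJI m n r L J I, zip J I)]"])
  show "\<And>X. X \<notin> Emat m n \<Longrightarrow> fP m n r L J I X = gzero" by (simp add: fP_def)
  show "\<forall>X\<in>Emat m n. fP m n r L J I X = glsum (map (\<lambda>(c, ks). gmul c (gprod (map (\<lambda>(i, j). X i j) ks))) [(cJI m n r L J I, zip J I)])"
    by (simp add: fP_def)
  have "L (ofV m n r (eb J)) \<in> Lam" using L by (simp add: TrVd_Lam)
  then show "\<forall>(c, ks)\<in>set [(cJI m n r L J I, zip J I)]. c \<in> Lam \<and> length ks = r \<and> (\<forall>(i, j)\<in>set ks. i < m + n \<and> j < m + n)"
    using J I by (auto simp: cJI_def Idx_def dest: set_zip_leftD set_zip_rightD)
qed

lemma zip_map_nth: "length J = r \<Longrightarrow> length I = r \<Longrightarrow>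
   map (\<lambda>(i, j). f i j) (zip J I) = map (\<lambda>a. f (J ! a) (I ! a)) [0..<r]"
  by (rule nth_equalityI) auto

lemma toM_entry: "X \<in> Emat m n \<Longrightarrow> i < m + n \<Longrightarrow> j < m + n \<Longrightarrow> Rep_gr (toM m n X $$ (i, j)) = X i j"
  by (simp add: toM_def Emat_Lam)

lemma toV_entry: "w \<in> TrV m n r \<Longrightarrow> Rep_gr (toV w I) = w I"
  by (simp add: toV_def TrV_Lam)

lemma fP_term:
  assumes L: "L \<in> TrVd m n r" and X: "X \<in> Emat m n" and w: "w \<in> TrV m n r"
    and J: "J \<in> Idx m n r" and I: "I \<in> Idx m n r"
  shows "gmul (fP m n r L J I X) (LP m n r I w) =
    Rep_gr (Lt m n r L (eb J) * coef m r (toM m n X) J I * toV w I)"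
proof -
  have m1: "map (\<lambda>(i, j). X i j) (zip J I) = map Rep_gr (map (\<lambda>a. toM m n X $$ (J ! a, I ! a)) [0..<r])"
    using J I X by (simp add: zip_map_nth Idx_length toM_entry Idx_nth_less)
  have c: "cJI m n r L J I = Rep_gr (sc (tsign m r J I) * Lt m n r L (eb J))"
    unfolding cJI_def Rep_Lt[OF L, symmetric] gscale_Rep ..
  have "fP m n r L J I X = gmul (cJI m n r L J I) (gprod (map (\<lambda>(i, j). X i j) (zip J I)))"
    using X by (simp add: fP_def glsum_def gadd_def gzero_def)
  also have "\<dots> = Rep_gr (sc (tsign m r J I) * Lt m n r L (eb J) * prod_list (map (\<lambda>a. toM m n X $$ (J ! a, I ! a)) [0..<r]))"
    unfolding m1 c Rep_prod_list[symmetric] Rep_times ..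
  finally have f: "fP m n r L J I X = \<dots>" .
  have lp: "LP m n r I w = Rep_gr (toV w I)" using w by (simp add: LP_def toV_entry)
  have "sc (tsign m r J I) * Lt m n r L (eb J) * prod_list (map (\<lambda>a. toM m n X $$ (J ! a, I ! a)) [0..<r]) * toV w I
     = Lt m n r L (eb J) * coef m r (toM m n X) J I * toV w I"
    unfolding coef_def by (simp only: mult.assoc sc_left_comm[of "Lt m n r L (eb J)"])
  then show ?thesis unfolding f lp Rep_times[symmetric] by simp
qed

definition pl :: "nat \<Rightarrow> nat \<Rightarrow> nat \<Rightarrow> (nat list \<times> nat list) list" where
  "pl m n r = (SOME xs. set xs = Idx m n r \<times> Idx m n r \<and> distinct xs)"

lemma pl_props: "set (pl m n r) = Idx m n r \<times> Idx m n r" "distinct (pl m n r)"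
proof -
  have "\<exists>xs. set xs = Idx m n r \<times> Idx m n r \<and> distinct xs"
    by (rule finite_distinct_list) simp
  then have "set (pl m n r) = Idx m n r \<times> Idx m n r \<and> distinct (pl m n r)"
    unfolding pl_def by (rule someI_ex)
  then show "set (pl m n r) = Idx m n r \<times> Idx m n r" "distinct (pl m n r)" by auto
qed

lemma glsum_Rep_map: "glsum (map (\<lambda>p. Rep_gr (g p)) xs) = Rep_gr (sum_list (map g xs))"
  by (simp add: Rep_sum_list o_def)

lemma Psi_PT:
  assumes L: "L \<in> TrVd m n r"
  shows "Psi m n r L \<in> PT m n r"
  unfolding PT_def
proof (intro CollectI conjI allI impI exI[of _ "map (\<lambda>(J, I). (fP m n r L J I, LP m n r I)) (pl m n r)"])
  show "\<And>X w. \<not> (X \<in> Emat m n \<and> w \<in> TrV m n r) \<Longrightarrow> Psi m n r L (X, w) = gzero"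
    by (auto simp: Psi_def)
  show "\<forall>(f, L)\<in>set (map (\<lambda>(J, I). (fP m n r L J I, LP m n r I)) (pl m n r)). f \<in> Pr m n r \<and> L \<in> TrVd m n r"
    using pl_props by (auto simp: fP_Pr[OF L] LP_TrVd)
  show "\<forall>X\<in>Emat m n. \<forall>w\<in>TrV m n r. Psi m n r L (X, w) =
    glsum (map (\<lambda>(f, L). gmul (f X) (L w)) (map (\<lambda>(J, I). (fP m n r L J I, LP m n r I)) (pl m n r)))"
  proof (intro ballI)
    fix X w assume X: "X \<in> Emat m n" and w: "w \<in> TrV m n r"
    let ?g = "\<lambda>(J, I). Lt m n r L (eb J) * coef m r (toM m n X) J I * toV w I"
    have "map (\<lambda>(f, L). gmul (f X) (L w)) (map (\<lambda>(J, I). (fP m n r L J I, LP m n r I)) (pl m n r))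
        = map (\<lambda>p. Rep_gr (?g p)) (pl m n r)"
      using pl_props(1) by (auto simp: fP_term[OF L X w])
    then have "glsum (map (\<lambda>(f, L). gmul (f X) (L w)) (map (\<lambda>(J, I). (fP m n r L J I, LP m n r I)) (pl m n r)))
        = glsum (map (\<lambda>p. Rep_gr (?g p)) (pl m n r))" by (rule arg_cong)
    also have "\<dots> = Rep_gr (sum_list (map ?g (pl m n r)))" by (rule glsum_Rep_map)
    also have "sum_list (map ?g (pl m n r)) = sum ?g (Idx m n r \<times> Idx m n r)"
      using pl_props by (simp add: sum_list_distinct_conv_sum_set)
    also have "\<dots> = (\<Sum>J\<in>Idx m n r. \<Sum>I\<in>Idx m n r. Lt m n r L (eb J) * coef m r (toM m n X) J I * toV w I)"
      by (simp add: sum.cartesian_product)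
    finally show "Psi m n r L (X, w) = glsum (map (\<lambda>(f, L). gmul (f X) (L w)) (map (\<lambda>(J, I). (fP m n r L J I, LP m n r I)) (pl m n r)))"
      using X w by (simp add: Psi_def L_tact[OF L X w])
  qed
qed

section \<open>Invariance, injectivity, equivariance\<close>

lemma Psi_Gamma:
  assumes L: "L \<in> TrVd m n r"
  shows "Psi m n r L \<in> Gamma m n r"
  unfolding Gamma_def
proof (intro CollectI conjI ballI Psi_PT[OF L])
  fix g assume g: "g \<in> GLV m n"
  note gi = GLV_ginv[OF g] GLV_Emat[OF g]
  show "Rhat m n r g (Psi m n r L) = Psi m n r L"
  proof (rule ext, clarify)
    fix X w
    show "Rhat m n r g (Psi m n r L) (X, w) = Psi m n r L (X, w)"
    proof (cases "X \<in> Emat m n \<and> w \<in> TrV m n r")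
      case True
      then have X: "X \<in> Emat m n" and w: "w \<in> TrV m n r" by auto
      have "tact m n r (mmul m n X g) (tact m n r (ginv m n g) w) = tact m n r (mmul m n (mmul m n X g) (ginv m n g)) w"
        using gi X w by (simp add: tact_comp mmul_Emat)
      also have "mmul m n (mmul m n X g) (ginv m n g) = X"
        using gi X by (simp add: mmul_assoc mmul_mone_right)
      finally show ?thesis using X w gi by (simp add: Rhat_def Psi_def mmul_Emat tact_TrV)
    qed (auto simp: Rhat_def Psi_def)
  qed
qed

lemma Psi_inj: "inj_on (Psi m n r) (TrVd m n r)"
proof (rule inj_onI)
  fix L L' assume L: "L \<in> TrVd m n r" and L': "L' \<in> TrVd m n r" and eq: "Psi m n r L = Psi m n r L'"
  show "L = L'"
  proof
    fix w show "L w = L' w"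
    proof (cases "w \<in> TrV m n r")
      case True
      have "L w = Psi m n r L (mone m n, w)" using True by (simp add: Psi_def mone_Emat tact_mone)
      also have "\<dots> = Psi m n r L' (mone m n, w)" by (simp add: eq)
      also have "\<dots> = L' w" using True by (simp add: Psi_def mone_Emat tact_mone)
      finally show ?thesis .
    qed (use L L' in \<open>simp add: TrVd_def\<close>)
  qed
qed

lemma Psi_equiv:
  assumes g: "g \<in> GLV m n" and L: "L \<in> TrVd m n r"
  shows "Psi m n r (rho_dual m n r g L) = Lhat m n r g (Psi m n r L)"
proof (rule ext, clarify)
  fix X w
  note gi = GLV_ginv[OF g] GLV_Emat[OF g]
  show "Psi m n r (rho_dual m n r g L) (X, w) = Lhat m n r g (Psi m n r L) (X, w)"
  proof (cases "X \<in> Emat m n \<and> w \<in> TrV m n r")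
    case True
    then have X: "X \<in> Emat m n" and w: "w \<in> TrV m n r" by auto
    show ?thesis using X w gi
      by (simp add: Psi_def Lhat_def rho_dual_def tact_TrV tact_comp mmul_Emat)
  qed (auto simp: Lhat_def Psi_def)
qed

lemma Psi_add: "Psi m n r (dadd L L') = fadd (Psi m n r L) (Psi m n r L')"
  by (auto simp: Psi_def dadd_def fadd_def fun_eq_iff gadd_def gzero_def)

lemma Psi_smul: "Psi m n r (dsmul c L) = fsmul c (Psi m n r L)"
  by (auto simp: Psi_def dsmul_def fsmul_def fun_eq_iff gmul_gzero_right)


section \<open>Polynomial dependence on a complex parameter\<close>

definition tpoly :: "(complex \<Rightarrow> gr) \<Rightarrow> bool" where
  "tpoly F = (\<exists>N q. \<forall>t. F t = (\<Sum>k<N. sc (t ^ k) * q k))"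

lemma tpoly_pad:
  assumes "N \<le> M"
  shows "(\<Sum>k<N. sc (t ^ k) * q k) = (\<Sum>k<M. sc (t ^ k) * (if k < N then q k else 0))"
proof -
  have "(\<Sum>k<M. sc (t ^ k) * (if k < N then q k else 0)) = (\<Sum>k<N. sc (t ^ k) * (if k < N then q k else 0))"
    using assms by (intro sum.mono_neutral_right) auto
  then show ?thesis by simp
qed

lemma tpoly_const[simp]: "tpoly (\<lambda>t. c)"
  unfolding tpoly_def by (rule exI[of _ 1], rule exI[of _ "\<lambda>_. c"]) simp

lemma tpoly_add: assumes "tpoly F" "tpoly G" shows "tpoly (\<lambda>t. F t + G t)"
proof -
  obtain N q where F: "\<And>t. F t = (\<Sum>k<N. sc (t ^ k) * q k)" using assms(1) by (auto simp: tpoly_def)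
  obtain M p where G: "\<And>t. G t = (\<Sum>k<M. sc (t ^ k) * p k)" using assms(2) by (auto simp: tpoly_def)
  show ?thesis unfolding tpoly_def
  proof (intro exI allI)
    fix t
    show "F t + G t = (\<Sum>k<N + M. sc (t ^ k) * ((if k < N then q k else 0) + (if k < M then p k else 0)))"
      using tpoly_pad[of N "N + M" t q] tpoly_pad[of M "N + M" t p]
      by (simp add: F G distrib_left sum.distrib)
  qed
qed

lemma tpoly_sum: "finite A \<Longrightarrow> (\<And>x. x \<in> A \<Longrightarrow> tpoly (F x)) \<Longrightarrow> tpoly (\<lambda>t. \<Sum>x\<in>A. F x t)"
  by (induction A rule: finite_induct) (auto intro: tpoly_add)

lemma tpoly_sum_list: "(\<And>x. x \<in> set xs \<Longrightarrow> tpoly (F x)) \<Longrightarrow> tpoly (\<lambda>t. sum_list (map (\<lambda>x. F x t) xs))"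
  by (induction xs) (auto intro: tpoly_add)

lemma tpoly_lmult: assumes "tpoly F" shows "tpoly (\<lambda>t. c * F t)"
proof -
  obtain N q where F: "\<And>t. F t = (\<Sum>k<N. sc (t ^ k) * q k)" using assms by (auto simp: tpoly_def)
  show ?thesis unfolding tpoly_def
    by (intro exI[of _ N] exI[of _ "\<lambda>k. c * q k"] allI)
       (simp add: F sum_distrib_left sc_left_comm[of c])
qed

lemma tpoly_shift: assumes "tpoly F" shows "tpoly (\<lambda>t. sc t * F t)"
proof -
  obtain N q where F: "\<And>t. F t = (\<Sum>k<N. sc (t ^ k) * q k)" using assms by (auto simp: tpoly_def)
  show ?thesis unfolding tpoly_def
  proof (intro exI allI)
    fix t
    have "sc t * F t = (\<Sum>k<N. sc (t ^ Suc k) * q k)"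
      by (simp add: F sum_distrib_left mult.assoc[symmetric] sc_mult[symmetric] mult.commute)
    also have "\<dots> = (\<Sum>k<Suc N. sc (t ^ k) * (case k of 0 \<Rightarrow> 0 | Suc j \<Rightarrow> q j))"
      by (subst sum.lessThan_Suc_shift) simp
    finally show "sc t * F t = \<dots>" .
  qed
qed

lemma tpoly_scpow: "tpoly F \<Longrightarrow> tpoly (\<lambda>t. sc (t ^ k) * F t)"
proof (induction k)
  case 0 then show ?case by simp
next
  case (Suc k)
  then have "tpoly (\<lambda>t. sc t * (sc (t ^ k) * F t))" by (intro tpoly_shift) auto
  then show ?case by (simp add: sc_mult mult.assoc)
qed

lemma tpoly_mult: assumes "tpoly F" "tpoly G" shows "tpoly (\<lambda>t. F t * G t)"
proof -
  obtain N q where F: "\<And>t. F t = (\<Sum>k<N. sc (t ^ k) * q k)" using assms(1) by (auto simp: tpoly_def)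
  have "tpoly (\<lambda>t. \<Sum>k<N. sc (t ^ k) * (q k * G t))"
    by (intro tpoly_sum tpoly_scpow tpoly_lmult assms(2)) simp
  then show ?thesis by (simp add: F sum_distrib_right mult.assoc)
qed

lemma tpoly_prod_list: "(\<And>x. x \<in> set xs \<Longrightarrow> tpoly (F x)) \<Longrightarrow> tpoly (\<lambda>t. prod_list (map (\<lambda>x. F x t) xs))"
  by (induction xs) (auto intro: tpoly_mult)

lemma tpoly_sc: "tpoly (\<lambda>t. sc t)"
  using tpoly_shift[OF tpoly_const[of 1]] by simp

lemma tpoly_diff: "tpoly F \<Longrightarrow> tpoly G \<Longrightarrow> tpoly (\<lambda>t. F t - G t)"
  using tpoly_add[of F "\<lambda>t. (-1) * G t"] tpoly_lmult[of G "-1"] by simp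

lemma Rep_sc_apply: "Rep_gr (sc c * a) S = c * Rep_gr a S"
  by (simp add: sc_mult_left_Rep gscale_def del: Rep_times)

lemma tpoly_zero:
  assumes P: "tpoly F" and inf: "infinite {t. F t = 0}"
  shows "F 0 = 0"
proof -
  obtain N q where F: "\<And>t. F t = (\<Sum>k<N. sc (t ^ k) * q k)" using P by (auto simp: tpoly_def)
  have "Rep_gr (F 0) S = 0" for S
  proof -
    define p where "p = (\<Sum>k<N. monom (Rep_gr (q k) S) k)"
    have pe: "poly p t = Rep_gr (F t) S" for t
      by (simp add: p_def F Rep_sum gsum_def poly_sum poly_monom Rep_sc_apply mult.commute del: Rep_times)
    have "{t. F t = 0} \<subseteq> {t. poly p t = 0}" by (auto simp: pe gzero_def)
    then have "infinite {t. poly p t = 0}" using inf finite_subset by blast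
    then have "p = 0" using poly_roots_finite by blast
    then show ?thesis using pe[of 0] by simp
  qed
  then show ?thesis by (simp add: Rep_gr_inject[symmetric] gzero_def fun_eq_iff)
qed


section \<open>Filtration and nilpotency\<close>

definition low :: "nat \<Rightarrow> gr \<Rightarrow> bool" where
  "low k a = (\<forall>S. Rep_gr a S \<noteq> 0 \<longrightarrow> k \<le> card S)"
definition supp :: "nat set \<Rightarrow> gr \<Rightarrow> bool" where
  "supp G a = (\<forall>S. Rep_gr a S \<noteq> 0 \<longrightarrow> S \<subseteq> G)"

lemma low_0[simp]: "low 0 a" by (simp add: low_def)
lemma low_zero[simp]: "low k 0" by (simp add: low_def gzero_def)
lemma supp_zero[simp]: "supp G 0" by (simp add: supp_def gzero_def)

lemma low_mult: assumes "low j a" "low k b" shows "low (j + k) (a * b)"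
  unfolding low_def
proof (intro allI impI)
  fix S assume "Rep_gr (a * b) S \<noteq> 0"
  then obtain T where T: "finite S" "T \<subseteq> S" "Rep_gr a T \<noteq> 0" "Rep_gr b (S - T) \<noteq> 0"
    by (auto elim: gmul_nonzeroE)
  have "card S = card T + card (S - T)" using T
    by (metis card_Diff_subset card_mono diff_add_inverse finite_subset le_add_diff_inverse)
  then show "j + k \<le> card S" using T assms by (auto simp: low_def) (metis add_le_mono)
qed

lemma supp_mult: assumes "supp G a" "supp G b" shows "supp G (a * b)"
  unfolding supp_def
proof (intro allI impI)
  fix S assume "Rep_gr (a * b) S \<noteq> 0"
  then obtain T where T: "finite S" "T \<subseteq> S" "Rep_gr a T \<noteq> 0" "Rep_gr b (S - T) \<noteq> 0"
    by (auto elim: gmul_nonzeroE)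
  then have "T \<subseteq> G" "S - T \<subseteq> G" using assms by (auto simp: supp_def)
  then show "S \<subseteq> G" by blast
qed

lemma Rep_add_nz: "Rep_gr (a + b) S \<noteq> 0 \<Longrightarrow> Rep_gr a S \<noteq> 0 \<or> Rep_gr b S \<noteq> 0"
  by (auto simp: gadd_def)
lemma low_add: "low k a \<Longrightarrow> low k b \<Longrightarrow> low k (a + b)"
  unfolding low_def by (meson Rep_add_nz)
lemma supp_add: "supp G a \<Longrightarrow> supp G b \<Longrightarrow> supp G (a + b)"
  unfolding supp_def by (meson Rep_add_nz)
lemma low_sum: "(\<And>x. x \<in> A \<Longrightarrow> low k (f x)) \<Longrightarrow> low k (sum f A)"
  by (induction A rule: infinite_finite_induct) (auto intro: low_add)
lemma supp_sum: "(\<And>x. x \<in> A \<Longrightarrow> supp G (f x)) \<Longrightarrow> supp G (sum f A)"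
  by (induction A rule: infinite_finite_induct) (auto intro: supp_add)
lemma supp_sc: "supp G (sc c)"
  by (auto simp: supp_def Rep_sc gscale_def gone_def)
lemma low_uminus: "low k a \<Longrightarrow> low k (- a)"
  by (auto simp: low_def gscale_def)
lemma supp_uminus: "supp G a \<Longrightarrow> supp G (- a)"
  by (auto simp: supp_def gscale_def)

lemma low_supp_zero:
  assumes "low k a" "supp G a" "finite G" "card G < k" shows "a = 0"
proof -
  have "Rep_gr a S = 0" for S
  proof (rule ccontr)
    assume "Rep_gr a S \<noteq> 0"
    then have k: "k \<le> card S" and SG: "S \<subseteq> G" using assms by (auto simp: low_def supp_def)
    show False using card_mono[OF assms(3) SG] assms(4) k by simp
  qed
  then show ?thesis by (simp add: Rep_gr_inject[symmetric] gzero_def fun_eq_iff)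
qed

definition gens :: "gr \<Rightarrow> nat set" where "gens a = \<Union>{S. Rep_gr a S \<noteq> 0}"

lemma finite_gens: "finite (gens a)"
  using Rep_gr_Lam[of a] unfolding gens_def Lam_def by auto

lemma supp_gens: "gens a \<subseteq> G \<Longrightarrow> supp G a"
  by (auto simp: supp_def gens_def)

lemma low1_body: assumes "Rep_gr a {} = 0" shows "low 1 a"
  unfolding low_def
proof (intro allI impI)
  fix S assume S: "Rep_gr a S \<noteq> 0"
  then have "finite S" using Rep_gr_Lam[of a] by (auto simp: Lam_def)
  moreover have "S \<noteq> {}" using S assms by auto
  ultimately show "1 \<le> card S" by (simp add: Suc_le_eq card_gt_0_iff)
qed

definition lowM :: "nat \<Rightarrow> gr mat \<Rightarrow> bool" where
  "lowM k M = (\<forall>i<dim_row M. \<forall>j<dim_col M. low k (M $$ (i, j)))"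
definition suppM :: "nat set \<Rightarrow> gr mat \<Rightarrow> bool" where
  "suppM G M = (\<forall>i<dim_row M. \<forall>j<dim_col M. supp G (M $$ (i, j)))"

lemma lowM_mult: "A \<in> carrier_mat a b \<Longrightarrow> B \<in> carrier_mat b c \<Longrightarrow> lowM j A \<Longrightarrow> lowM k B \<Longrightarrow> lowM (j + k) (A * B)"
  by (auto simp: lowM_def scalar_prod_def intro!: low_sum low_mult)
lemma suppM_mult: "A \<in> carrier_mat a b \<Longrightarrow> B \<in> carrier_mat b c \<Longrightarrow> suppM G A \<Longrightarrow> suppM G B \<Longrightarrow> suppM G (A * B)"
  by (auto simp: suppM_def scalar_prod_def intro!: supp_sum supp_mult)

lemma lowM_suppM_pow:
  assumes P: "P \<in> carrier_mat d d" "lowM 1 P" "suppM G P"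
  shows "lowM k (P ^\<^sub>m k) \<and> suppM G (P ^\<^sub>m k)"
proof (induction k)
  case 0 then show ?case using P
    by (auto simp: lowM_def suppM_def supp_sc[of G 1, simplified] supp_sc[of G 0, simplified])
next
  case (Suc k)
  have "lowM (k + 1) (P ^\<^sub>m k * P)" using Suc P by (intro lowM_mult[of _ d d _ d]) auto
  moreover have "suppM G (P ^\<^sub>m k * P)" using Suc P by (intro suppM_mult[of _ d d _ d]) auto
  ultimately show ?case by simp
qed

lemma nilpotent:
  assumes P: "P \<in> carrier_mat d d" "lowM 1 P" "suppM G P" "finite G"
  shows "P ^\<^sub>m (Suc (card G)) = 0\<^sub>m d d"
proof (rule eq_matI)
  fix i j assume ij: "i < dim_row (0\<^sub>m d d :: gr mat)" "j < dim_col (0\<^sub>m d d :: gr mat)"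
  have h: "lowM (Suc (card G)) (P ^\<^sub>m Suc (card G)) \<and> suppM G (P ^\<^sub>m Suc (card G))"
    by (rule lowM_suppM_pow[OF P(1-3)])
  have "lowM (Suc (card G)) (P ^\<^sub>m Suc (card G))" "suppM G (P ^\<^sub>m Suc (card G))"
    using h by blast+
  then have "low (Suc (card G)) ((P ^\<^sub>m Suc (card G)) $$ (i, j))" "supp G ((P ^\<^sub>m Suc (card G)) $$ (i, j))"
    using ij P by (auto simp: lowM_def suppM_def)
  then show "(P ^\<^sub>m Suc (card G)) $$ (i, j) = 0\<^sub>m d d $$ (i, j)"
    using ij low_supp_zero[OF _ _ P(4)] by auto
qed (use P in auto)

fun geo :: "nat \<Rightarrow> gr mat \<Rightarrow> nat \<Rightarrow> gr mat" where
  "geo d P 0 = 0\<^sub>m d d"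
| "geo d P (Suc k) = geo d P k + P ^\<^sub>m k"

lemma geo_carrier: "P \<in> carrier_mat d d \<Longrightarrow> geo d P k \<in> carrier_mat d d"
  by (induction k) auto

lemma pow_mat_Suc_left: assumes P: "P \<in> carrier_mat d d" shows "P * P ^\<^sub>m k = P ^\<^sub>m k * P"
proof (induction k)
  case 0 then show ?case using P by simp
next
  case (Suc k)
  have "P * P ^\<^sub>m Suc k = P * (P ^\<^sub>m k * P)" by simp
  also have "\<dots> = (P * P ^\<^sub>m k) * P" using P by (simp add: assoc_mult_mat[of P d d "P ^\<^sub>m k" d P d])
  also have "\<dots> = P ^\<^sub>m Suc k * P" using Suc by simp
  finally show ?case .
qed

lemma geo_right:
  assumes P: "P \<in> carrier_mat d d"
  shows "geo d P k * (1\<^sub>m d - P) = 1\<^sub>m d - P ^\<^sub>m k"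
proof (induction k)
  case 0 then show ?case using P by (auto intro!: eq_matI)
next
  case (Suc k)
  have c: "geo d P k \<in> carrier_mat d d" "P ^\<^sub>m k \<in> carrier_mat d d" "1\<^sub>m d - P \<in> carrier_mat d d"
    using P geo_carrier by auto
  have "geo d P (Suc k) * (1\<^sub>m d - P) = geo d P k * (1\<^sub>m d - P) + P ^\<^sub>m k * (1\<^sub>m d - P)"
    using c by (simp add: add_mult_distrib_mat)
  also have "P ^\<^sub>m k * (1\<^sub>m d - P) = P ^\<^sub>m k - P ^\<^sub>m Suc k"
    using mult_minus_distrib_mat[OF c(2) one_carrier_mat P] c P by simp
  also have "geo d P k * (1\<^sub>m d - P) + (P ^\<^sub>m k - P ^\<^sub>m Suc k) = 1\<^sub>m d - P ^\<^sub>m Suc k"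
    unfolding Suc.IH using P by (intro eq_matI) auto
  finally show ?case .
qed

lemma geo_left:
  assumes P: "P \<in> carrier_mat d d"
  shows "(1\<^sub>m d - P) * geo d P k = 1\<^sub>m d - P ^\<^sub>m k"
proof (induction k)
  case 0 then show ?case using P by (auto intro!: eq_matI)
next
  case (Suc k)
  have c: "geo d P k \<in> carrier_mat d d" "P ^\<^sub>m k \<in> carrier_mat d d" "1\<^sub>m d - P \<in> carrier_mat d d"
    using P geo_carrier by auto
  have "(1\<^sub>m d - P) * geo d P (Suc k) = (1\<^sub>m d - P) * geo d P k + (1\<^sub>m d - P) * P ^\<^sub>m k"
    using c by (simp add: mult_add_distrib_mat)
  also have "(1\<^sub>m d - P) * P ^\<^sub>m k = P ^\<^sub>m k - P ^\<^sub>m Suc k"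
    using minus_mult_distrib_mat[OF one_carrier_mat P c(2)] c P pow_mat_Suc_left[OF P, of k] by simp
  also have "(1\<^sub>m d - P) * geo d P k + (P ^\<^sub>m k - P ^\<^sub>m Suc k) = 1\<^sub>m d - P ^\<^sub>m Suc k"
    unfolding Suc.IH using P by (intro eq_matI) auto
  finally show ?case .
qed

lemma geo_even: "P \<in> carrier_mat d d \<Longrightarrow> evenM m P \<Longrightarrow> evenM m (geo d P k)"
  by (induction k) (auto intro!: evenM_add evenM_pow geo_carrier simp: evenM_zero)


definition bodyM :: "gr mat \<Rightarrow> complex mat" where
  "bodyM T = mat (dim_row T) (dim_col T) (\<lambda>(i, j). Rep_gr (T $$ (i, j)) {})"
definition scM :: "complex mat \<Rightarrow> gr mat" where
  "scM M = mat (dim_row M) (dim_col M) (\<lambda>(i, j). sc (M $$ (i, j)))"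

lemma bodyM_carrier[simp]: "T \<in> carrier_mat a b \<Longrightarrow> bodyM T \<in> carrier_mat a b"
  by (auto simp: bodyM_def)
lemma scM_carrier[simp]: "M \<in> carrier_mat a b \<Longrightarrow> scM M \<in> carrier_mat a b"
  by (auto simp: scM_def)

lemma scM_mult:
  assumes "M \<in> carrier_mat a b" "N \<in> carrier_mat b c"
  shows "scM (M * N) = scM M * scM N"
  using assms by (intro eq_matI) (auto simp: scM_def scalar_prod_def sc_sum sc_mult)

lemma scM_one: "scM (1\<^sub>m k) = 1\<^sub>m k"
  by (intro eq_matI) (auto simp: scM_def)

lemma Rep_sc_empty: "Rep_gr (sc c) {} = c"
  by (simp add: Rep_sc gscale_def gone_def)

lemma par_True_body: "par True a \<Longrightarrow> Rep_gr a {} = 0"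
  by (auto simp: par_def Defs.hom_def)

lemma Rep_minus_apply: "Rep_gr (a - b) S = Rep_gr a S - Rep_gr b S"
  by (simp add: gadd_def gscale_def)

lemma Rep_plus_apply: "Rep_gr (a + b) S = Rep_gr a S + Rep_gr b S"
  by (simp add: gadd_def)

section \<open>Invertibility of matrices with invertible body\<close>

lemma inv_exists:
  fixes T :: "gr mat" and m n :: nat
  defines "d \<equiv> m + n"
  assumes T: "T \<in> carrier_mat d d" "evenM m T"
    and det: "det (bodyM T) \<noteq> 0"
  shows "\<exists>H \<in> carrier_mat d d. evenM m H \<and> H * T = 1\<^sub>m d \<and> T * H = 1\<^sub>m d"
proof -
  define B where "B = bodyM T"
  have Bc: "B \<in> carrier_mat d d" using T by (simp add: B_def)
  have "B \<in> Units (ring_mat TYPE(complex) d ())"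
    by (rule det_non_zero_imp_unit[OF Bc]) (use det in \<open>simp add: B_def\<close>)
  then obtain C where Cc: "C \<in> carrier_mat d d" and CB: "C * B = 1\<^sub>m d" and BC: "B * C = 1\<^sub>m d"
    unfolding Units_def ring_mat_def by auto
  have Bblock: "B $$ (i, j) = 0" if "i < d" "j < d" "pty m i \<noteq> pty m j" for i j
  proof -
    have all: "\<forall>i<dim_row T. \<forall>j<dim_col T. par (pty m i \<noteq> pty m j) (T $$ (i, j))"
      using T(2) by (simp only: evenM_def)
    have "i < dim_row T" "j < dim_col T" using T(1) that by auto
    then have "par (pty m i \<noteq> pty m j) (T $$ (i, j))" using all by blast
    then have "par True (T $$ (i, j))" using that(3) by simp
    then show ?thesis using that T by (simp add: B_def bodyM_def par_True_body)
  qed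
  define C' where "C' = mat d d (\<lambda>(i, j). if pty m i = pty m j then C $$ (i, j) else 0)"
  have C'c: "C' \<in> carrier_mat d d" by (simp add: C'_def)
  have BC': "B * C' = 1\<^sub>m d"
  proof (rule eq_matI)
    fix i j assume ij: "i < dim_row (1\<^sub>m d :: complex mat)" "j < dim_col (1\<^sub>m d :: complex mat)"
    then have ij': "i < d" "j < d" by auto
    have "(B * C') $$ (i, j) = (\<Sum>k\<in>{0..<d}. B $$ (i, k) * C' $$ (k, j))"
      using ij' Bc C'c by (simp add: scalar_prod_def)
    also have "\<dots> = (\<Sum>k\<in>{0..<d}. if pty m i = pty m j then B $$ (i, k) * C $$ (k, j) else 0)"
      by (rule sum.cong) (use ij' Bblock in \<open>auto simp: C'_def\<close>)
    also have "\<dots> = (if pty m i = pty m j then (B * C) $$ (i, j) else 0)"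
      using ij' Bc Cc by (simp add: scalar_prod_def)
    also have "\<dots> = 1\<^sub>m d $$ (i, j)" using ij' BC by auto
    finally show "(B * C') $$ (i, j) = 1\<^sub>m d $$ (i, j)" .
  qed (use Bc C'c in auto)
  have "C = C * (B * C')" using Cc by (simp add: BC')
  also have "\<dots> = (C * B) * C'" using Cc Bc C'c by simp
  also have "\<dots> = C'" using C'c by (simp add: CB)
  finally have CC': "C = C'" .
  have Cblock: "C $$ (i, j) = 0" if "i < d" "j < d" "pty m i \<noteq> pty m j" for i j
    using that by (simp add: CC' C'_def)
  define Ch where "Ch = scM C"
  define Bh where "Bh = scM B"
  have Chc: "Ch \<in> carrier_mat d d" and Bhc: "Bh \<in> carrier_mat d d" using Cc Bc by (auto simp: Ch_def Bh_def)
  have ChBh: "Ch * Bh = 1\<^sub>m d" unfolding Ch_def Bh_def scM_mult[OF Cc Bc, symmetric] CB scM_one ..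
  have BhCh: "Bh * Ch = 1\<^sub>m d" unfolding Ch_def Bh_def scM_mult[OF Bc Cc, symmetric] BC scM_one ..
  have evCh: "evenM m Ch"
    unfolding evenM_def
  proof (intro allI impI)
    fix i j assume ij: "i < dim_row Ch" "j < dim_col Ch"
    then have ij': "i < d" "j < d" using Chc by auto
    show "par (pty m i \<noteq> pty m j) (Ch $$ (i, j))"
    proof (cases "pty m i = pty m j")
      case True then show ?thesis using ij' Cc by (simp add: Ch_def scM_def)
    next
      case False then show ?thesis using ij' Cc Cblock[OF ij'] by (simp add: Ch_def scM_def)
    qed
  qed
  have evBh: "evenM m Bh"
    unfolding evenM_def
  proof (intro allI impI)
    fix i j assume ij: "i < dim_row Bh" "j < dim_col Bh"
    then have ij': "i < d" "j < d" using Bhc by auto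
    show "par (pty m i \<noteq> pty m j) (Bh $$ (i, j))"
    proof (cases "pty m i = pty m j")
      case True then show ?thesis using ij' Bc by (simp add: Bh_def scM_def)
    next
      case False then show ?thesis using ij' Bc Bblock[OF ij'] by (simp add: Bh_def scM_def)
    qed
  qed
  define N where "N = Bh - T"
  have Nc: "N \<in> carrier_mat d d" unfolding N_def by (rule minus_carrier_mat[OF T(1)])
  have evN: "evenM m N" unfolding N_def by (rule evenM_minus[OF Bhc T(1) evBh T(2)])
  have Nbody: "Rep_gr (N $$ (i, j)) {} = 0" if "i < d" "j < d" for i j
    using that Bc T by (simp add: N_def Bh_def scM_def B_def bodyM_def Rep_minus_apply Rep_sc_empty Rep_sc gadd_def gscale_def gone_def)
  define G where "G = (\<Union>p\<in>{..<d} \<times> {..<d}. gens (N $$ p))"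
  have fG: "finite G" by (simp add: G_def finite_gens)
  have lowN: "lowM 1 N" using Nc Nbody by (auto simp: lowM_def intro!: low1_body[unfolded One_nat_def])
  have suppN: "suppM G N" using Nc by (auto simp: suppM_def G_def intro!: supp_gens)
  have lowCh: "lowM 0 Ch" by (simp add: lowM_def)
  have suppCh: "suppM G Ch" using Cc by (auto simp: suppM_def Ch_def scM_def supp_sc)
  define P1 where "P1 = Ch * N"
  define P2 where "P2 = N * Ch"
  have P1c: "P1 \<in> carrier_mat d d" and P2c: "P2 \<in> carrier_mat d d" using Chc Nc by (auto simp: P1_def P2_def)
  have lowP1: "lowM 1 P1" using lowM_mult[OF Chc Nc lowCh lowN] by (simp add: P1_def)
  have lowP2: "lowM 1 P2" using lowM_mult[OF Nc Chc lowN lowCh] by (simp add: P2_def)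
  have suppP1: "suppM G P1" using suppM_mult[OF Chc Nc suppCh suppN] by (simp add: P1_def)
  have suppP2: "suppM G P2" using suppM_mult[OF Nc Chc suppN suppCh] by (simp add: P2_def)
  define K where "K = Suc (card G)"
  have nil1: "P1 ^\<^sub>m K = 0\<^sub>m d d" unfolding K_def by (rule nilpotent[OF P1c lowP1 suppP1 fG])
  have nil2: "P2 ^\<^sub>m K = 0\<^sub>m d d" unfolding K_def by (rule nilpotent[OF P2c lowP2 suppP2 fG])
  have TBN: "T = Bh - N" using T Bhc by (intro eq_matI) (auto simp: N_def)
  have ChT: "Ch * T = 1\<^sub>m d - P1"
    unfolding TBN P1_def mult_minus_distrib_mat[OF Chc Bhc Nc] ChBh ..
  have TCh: "T * Ch = 1\<^sub>m d - P2"
    unfolding TBN P2_def minus_mult_distrib_mat[OF Bhc Nc Chc] BhCh ..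
  have one_minus_zero: "1\<^sub>m d - 0\<^sub>m d d = (1\<^sub>m d :: gr mat)" by (intro eq_matI) auto
  define U1 where "U1 = geo d P1 K"
  define U2 where "U2 = geo d P2 K"
  have U1c: "U1 \<in> carrier_mat d d" and U2c: "U2 \<in> carrier_mat d d"
    using geo_carrier P1c P2c by (auto simp: U1_def U2_def)
  have U1P: "U1 * (1\<^sub>m d - P1) = 1\<^sub>m d" unfolding U1_def geo_right[OF P1c] nil1 one_minus_zero ..
  have U2P: "(1\<^sub>m d - P2) * U2 = 1\<^sub>m d" unfolding U2_def geo_left[OF P2c] nil2 one_minus_zero ..
  define H1 where "H1 = U1 * Ch"
  define H2 where "H2 = Ch * U2"
  have H1c: "H1 \<in> carrier_mat d d" and H2c: "H2 \<in> carrier_mat d d" using U1c U2c Chc by (auto simp: H1_def H2_def)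
  have H1T: "H1 * T = 1\<^sub>m d"
  proof -
    have "H1 * T = U1 * (Ch * T)" using U1c Chc T by (simp add: H1_def)
    then show ?thesis by (simp add: ChT U1P)
  qed
  have TH2: "T * H2 = 1\<^sub>m d"
  proof -
    have "T * H2 = (T * Ch) * U2" using U2c Chc T by (simp add: H2_def)
    then show ?thesis by (simp add: TCh U2P)
  qed
  have "H1 = H1 * (T * H2)" using H1c by (simp add: TH2)
  also have "\<dots> = (H1 * T) * H2" using H1c H2c T by simp
  also have "\<dots> = H2" using H2c by (simp add: H1T)
  finally have H12: "H1 = H2" .
  have evP1: "evenM m P1" unfolding P1_def by (rule evenM_mult[OF Chc Nc evCh evN])
  have evH1: "evenM m H1" unfolding H1_def U1_def
    by (rule evenM_mult[OF geo_carrier[OF P1c] Chc geo_even[OF P1c evP1] evCh])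
  show ?thesis using H1c evH1 H1T TH2 H12 by auto
qed


section \<open>The family X + t\<close>

definition famM :: "nat \<Rightarrow> nat \<Rightarrow> Defs.mat \<Rightarrow> complex \<Rightarrow> gr mat" where
  "famM m n X t = mat (m + n) (m + n) (\<lambda>(i, j). toM m n X $$ (i, j) + (if i = j then sc t else 0))"

lemma famM_carrier[simp]: "famM m n X t \<in> carrier_mat (m + n) (m + n)"
  by (simp add: famM_def)

lemma famM_entry: "i < m + n \<Longrightarrow> j < m + n \<Longrightarrow> famM m n X t $$ (i, j) = toM m n X $$ (i, j) + (if i = j then sc t else 0)"
  by (simp add: famM_def)

lemma famM_0: "famM m n X 0 = toM m n X"
  by (intro eq_matI) (auto simp: famM_def toM_def)

lemma famM_even: assumes X: "X \<in> Emat m n" shows "evenM m (famM m n X t)"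
  unfolding evenM_def
proof (intro allI impI)
  fix i j assume ij: "i < dim_row (famM m n X t)" "j < dim_col (famM m n X t)"
  then have ij': "i < m + n" "j < m + n" by (auto simp: famM_def)
  have a: "par (pty m i \<noteq> pty m j) (toM m n X $$ (i, j))"
    using evenM_toM[OF X] ij' unfolding evenM_def by (simp add: toM_def)
  have b: "par (pty m i \<noteq> pty m j) (if i = j then sc t else 0)" by auto
  show "par (pty m i \<noteq> pty m j) (famM m n X t $$ (i, j))"
    using par_add[OF a b] ij' by (simp add: famM_entry)
qed

lemma bodyM_famM: "bodyM (famM m n X t) = bodyM (toM m n X) + t \<cdot>\<^sub>m 1\<^sub>m (m + n)"
  by (intro eq_matI) (auto simp: bodyM_def famM_def toM_def Rep_plus_apply Rep_sc_empty gzero_def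
      simp del: Rep_plus)

lemma det_finite:
  fixes B :: "complex mat"
  assumes B: "B \<in> carrier_mat k k"
  shows "finite {t. det (B + t \<cdot>\<^sub>m 1\<^sub>m k) = 0}"
proof -
  have cp: "char_poly B \<noteq> 0" using degree_monic_char_poly[OF B] by auto
  have "{t. det (B + t \<cdot>\<^sub>m 1\<^sub>m k) = 0} \<subseteq> uminus ` {x. poly (char_poly B) x = 0}"
  proof
    fix t assume "t \<in> {t. det (B + t \<cdot>\<^sub>m 1\<^sub>m k) = 0}"
    then have "det (char_matrix B (- t)) = 0" using B by (simp add: char_matrix_def)
    then have "eigenvalue B (- t)" using eigenvalue_det[OF B] by simp
    then have "poly (char_poly B) (- t) = 0" using eigenvalue_root_char_poly[OF B] by simp
    then show "t \<in> uminus ` {x. poly (char_poly B) x = 0}" by (intro image_eqI[of _ _ "- t"]) auto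
  qed
  moreover have "finite (uminus ` {x. poly (char_poly B) x = 0})" using poly_roots_finite[OF cp] by simp
  ultimately show ?thesis by (rule finite_subset)
qed

lemma fam_GLV:
  assumes X: "X \<in> Emat m n" and det: "det (bodyM (famM m n X t)) \<noteq> 0"
  shows "ofM m n (famM m n X t) \<in> GLV m n"
proof -
  obtain H where H: "H \<in> carrier_mat (m + n) (m + n)" "evenM m H" "H * famM m n X t = 1\<^sub>m (m + n)"
    "famM m n X t * H = 1\<^sub>m (m + n)"
    using inv_exists[OF famM_carrier famM_even[OF X] det] by blast
  have T: "ofM m n (famM m n X t) \<in> Emat m n" by (rule ofM_Emat[OF famM_carrier famM_even[OF X]])
  have Hm: "ofM m n H \<in> Emat m n" by (rule ofM_Emat[OF H(1,2)])
  show ?thesis unfolding GLV_def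
    using T Hm H by (auto simp: mmul_ofM mone_ofM intro!: bexI[of _ "ofM m n H"])
qed

lemma fam_cofinite:
  assumes X: "X \<in> Emat m n"
  shows "finite {t. ofM m n (famM m n X t) \<notin> GLV m n}"
proof -
  have "{t. ofM m n (famM m n X t) \<notin> GLV m n} \<subseteq> {t. det (bodyM (toM m n X) + t \<cdot>\<^sub>m 1\<^sub>m (m + n)) = 0}"
    using fam_GLV[OF X] by (auto simp: bodyM_famM)
  moreover have "finite {t. det (bodyM (toM m n X) + t \<cdot>\<^sub>m 1\<^sub>m (m + n)) = 0}"
    by (rule det_finite) simp
  ultimately show ?thesis by (rule finite_subset)
qed

lemma fam_infinite:
  assumes X: "X \<in> Emat m n"
  shows "infinite {t. ofM m n (famM m n X t) \<in> GLV m n}"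
proof
  assume "finite {t. ofM m n (famM m n X t) \<in> GLV m n}"
  then have "finite ({t. ofM m n (famM m n X t) \<in> GLV m n} \<union> {t. ofM m n (famM m n X t) \<notin> GLV m n})"
    using fam_cofinite[OF X] by simp
  moreover have "{t. ofM m n (famM m n X t) \<in> GLV m n} \<union> {t. ofM m n (famM m n X t) \<notin> GLV m n} = UNIV" by auto
  ultimately show False using infinite_UNIV_char_0 by auto
qed

lemma gprod_Abs: "(\<And>x. x \<in> set xs \<Longrightarrow> h x \<in> Lam) \<Longrightarrow> gprod (map h xs) = Rep_gr (prod_list (map (\<lambda>x. Abs_gr (h x)) xs))"
  by (induction xs) (auto simp: gprod_def)

lemma glsum_Abs: "(\<And>x. x \<in> set xs \<Longrightarrow> h x \<in> Lam) \<Longrightarrow> glsum (map h xs) = Rep_gr (sum_list (map (\<lambda>x. Abs_gr (h x)) xs))"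
  by (induction xs) (auto simp: glsum_def)

lemma glsum_Lam: "(\<And>x. x \<in> set xs \<Longrightarrow> h x \<in> Lam) \<Longrightarrow> glsum (map h xs) \<in> Lam"
  by (simp add: glsum_Abs)

lemma gprod_Lam: "(\<And>x. x \<in> set xs \<Longrightarrow> h x \<in> Lam) \<Longrightarrow> gprod (map h xs) \<in> Lam"
  by (simp add: gprod_Abs)

lemma Pr_rep:
  assumes f: "f \<in> Pr m n r" and Y: "Y \<in> Emat m n"
  obtains cs where "\<forall>(c, ks)\<in>set cs. c \<in> Lam"
    "f Y = Rep_gr (sum_list (map (\<lambda>(c, ks). Abs_gr c * prod_list (map (\<lambda>(i, j). Abs_gr (Y i j)) ks)) cs))"
    "\<And>Y'. Y' \<in> Emat m n \<Longrightarrow> f Y' = Rep_gr (sum_list (map (\<lambda>(c, ks). Abs_gr c * prod_list (map (\<lambda>(i, j). Abs_gr (Y' i j)) ks)) cs))"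
proof -
  obtain cs where cs: "\<forall>(c, ks)\<in>set cs. c \<in> Lam \<and> length ks = r \<and> (\<forall>(i, j)\<in>set ks. i < m + n \<and> j < m + n)"
    "\<forall>X\<in>Emat m n. f X = glsum (map (\<lambda>(c, ks). gmul c (gprod (map (\<lambda>(i, j). X i j) ks))) cs)"
    using f unfolding Pr_def by auto
  have gen: "f Y' = Rep_gr (sum_list (map (\<lambda>(c, ks). Abs_gr c * prod_list (map (\<lambda>(i, j). Abs_gr (Y' i j)) ks)) cs))"
    if Y': "Y' \<in> Emat m n" for Y'
  proof -
    have "f Y' = glsum (map (\<lambda>(c, ks). gmul c (gprod (map (\<lambda>(i, j). Y' i j) ks))) cs)" using cs Y' by auto
    also have "\<dots> = glsum (map (\<lambda>p. Rep_gr ((\<lambda>(c, ks). Abs_gr c * prod_list (map (\<lambda>(i, j). Abs_gr (Y' i j)) ks)) p)) cs)"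
    proof (rule arg_cong[where f = glsum], rule map_cong[OF refl])
      fix p assume p: "p \<in> set cs"
      obtain c ks where pc: "p = (c, ks)" by (cases p)
      have cL: "c \<in> Lam" using cs(1) p pc by auto
      have "gprod (map (\<lambda>(i, j). Y' i j) ks) = Rep_gr (prod_list (map (\<lambda>x. Abs_gr (case x of (i, j) \<Rightarrow> Y' i j)) ks))"
        by (rule gprod_Abs) (auto simp: Emat_Lam[OF Y'])
      then show "(case p of (c, ks) \<Rightarrow> gmul c (gprod (map (\<lambda>(i, j). Y' i j) ks))) =
        Rep_gr (case p of (c, ks) \<Rightarrow> Abs_gr c * prod_list (map (\<lambda>(i, j). Abs_gr (Y' i j)) ks))"
        using cL by (simp add: pc split_def)
    qed
    also have "\<dots> = Rep_gr (sum_list (map (\<lambda>(c, ks). Abs_gr c * prod_list (map (\<lambda>(i, j). Abs_gr (Y' i j)) ks)) cs))"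
      by (rule glsum_Rep_map)
    finally show ?thesis .
  qed
  show ?thesis using that[of cs] cs gen Y by auto
qed

lemma Pr_Lam: "f \<in> Pr m n r \<Longrightarrow> Y \<in> Emat m n \<Longrightarrow> f Y \<in> Lam"
  by (metis Pr_rep Rep_gr_Lam)

lemma tpoly_Pr:
  assumes f: "f \<in> Pr m n r" and Y: "\<And>t. Y t \<in> Emat m n" and P: "\<And>i j. tpoly (\<lambda>t. Abs_gr (Y t i j))"
  shows "tpoly (\<lambda>t. Abs_gr (f (Y t)))"
proof -
  obtain cs where cs: "\<And>Y'. Y' \<in> Emat m n \<Longrightarrow> f Y' = Rep_gr (sum_list (map (\<lambda>(c, ks). Abs_gr c * prod_list (map (\<lambda>(i, j). Abs_gr (Y' i j)) ks)) cs))"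
    using Pr_rep[OF f Y[of 0]] by metis
  have "tpoly (\<lambda>t. sum_list (map (\<lambda>p. (\<lambda>(c, ks). Abs_gr c * prod_list (map (\<lambda>q. (\<lambda>(i, j). Abs_gr (Y t i j)) q) ks)) p) cs))"
    by (intro tpoly_sum_list) (auto simp: split_def intro!: tpoly_mult tpoly_prod_list P)
  then show ?thesis by (simp add: cs[OF Y] Rep_gr_inverse split_def)
qed


lemma Abs_gmul: "a \<in> Lam \<Longrightarrow> b \<in> Lam \<Longrightarrow> Abs_gr (gmul a b) = Abs_gr a * Abs_gr b"
  by (simp add: Rep_gr_inject[symmetric])
lemma Abs_gadd: "a \<in> Lam \<Longrightarrow> b \<in> Lam \<Longrightarrow> Abs_gr (gadd a b) = Abs_gr a + Abs_gr b"
  by (simp add: Rep_gr_inject[symmetric])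

lemma sum_list_mult_const_right: "sum_list (map (\<lambda>x. f x * c) xs) = sum_list (map f xs) * (c :: gr)"
  by (induction xs) (auto simp: distrib_right)

lemma famM_entry_tpoly: assumes "i < m + n" "j < m + n" shows "tpoly (\<lambda>t. famM m n X t $$ (i, j))"
proof (cases "i = j")
  case True
  have "tpoly (\<lambda>t. toM m n X $$ (i, j) + sc t)" by (intro tpoly_add tpoly_const tpoly_sc)
  then show ?thesis using assms True by (simp add: famM_entry)
next
  case False then show ?thesis using assms by (simp add: famM_entry)
qed

lemma ofM_famM_tpoly: "tpoly (\<lambda>t. Abs_gr (ofM m n (famM m n X t) i j))"
proof (cases "i < m + n \<and> j < m + n")
  case True then show ?thesis by (simp add: ofM_def Rep_gr_inverse famM_entry_tpoly)
next
  case False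
  have e: "(\<lambda>t. Abs_gr (ofM m n (famM m n X t) i j)) = (\<lambda>t. 0)"
    unfolding ofM_def if_not_P[OF False] zero_gr_def ..
  show ?thesis unfolding e by simp
qed

lemma Gamma_surj:
  assumes Phi: "\<Phi> \<in> Gamma m n r"
  shows "\<exists>L\<in>TrVd m n r. Psi m n r L = \<Phi>"
proof -
  have PT: "\<Phi> \<in> PT m n r" and inv: "\<And>g. g \<in> GLV m n \<Longrightarrow> Rhat m n r g \<Phi> = \<Phi>"
    using Phi by (auto simp: Gamma_def)
  obtain ps where zero: "\<And>X w. \<not> (X \<in> Emat m n \<and> w \<in> TrV m n r) \<Longrightarrow> \<Phi> (X, w) = gzero"
    and ps: "\<forall>(f, L)\<in>set ps. f \<in> Pr m n r \<and> L \<in> TrVd m n r"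
    and rep: "\<forall>X\<in>Emat m n. \<forall>w\<in>TrV m n r. \<Phi> (X, w) = glsum (map (\<lambda>(f, L). gmul (f X) (L w)) ps)"
    using PT unfolding PT_def by auto
  have typed: "\<Phi> (X, w) = Rep_gr (sum_list (map (\<lambda>(f, L). Abs_gr (f X) * Abs_gr (L w)) ps))"
    if X: "X \<in> Emat m n" and w: "w \<in> TrV m n r" for X w
  proof -
    have "\<Phi> (X, w) = glsum (map (\<lambda>(f, L). gmul (f X) (L w)) ps)" using rep X w by auto
    also have "\<dots> = Rep_gr (sum_list (map (\<lambda>x. Abs_gr ((\<lambda>(f, L). gmul (f X) (L w)) x)) ps))"
      by (rule glsum_Abs) (use ps X w in \<open>auto simp: Pr_Lam TrVd_Lam\<close>)
    also have "map (\<lambda>x. Abs_gr ((\<lambda>(f, L). gmul (f X) (L w)) x)) ps = map (\<lambda>(f, L). Abs_gr (f X) * Abs_gr (L w)) ps"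
      by (rule map_cong[OF refl]) (use ps X w in \<open>auto simp: Pr_Lam TrVd_Lam Abs_gmul\<close>)
    finally show ?thesis .
  qed
  have PhiLam: "\<Phi> (X, w) \<in> Lam" if "X \<in> Emat m n" "w \<in> TrV m n r" for X w
    using typed[OF that] by simp
  define L0 where "L0 = (\<lambda>w. if w \<in> TrV m n r then \<Phi> (mone m n, w) else gzero)"
  have L0: "L0 \<in> TrVd m n r"
    unfolding TrVd_def
  proof (intro CollectI conjI ballI allI impI)
    fix w assume w: "w \<in> TrV m n r"
    show "L0 w \<in> Lam" using w PhiLam mone_Emat by (simp add: L0_def)
  next
    fix w w' assume w: "w \<in> TrV m n r" and w': "w' \<in> TrV m n r"
    have e: "map (\<lambda>(f, L). Abs_gr (f (mone m n)) * Abs_gr (L (tadd w w'))) ps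
      = map (\<lambda>x. (\<lambda>(f, L). Abs_gr (f (mone m n)) * Abs_gr (L w)) x + (\<lambda>(f, L). Abs_gr (f (mone m n)) * Abs_gr (L w')) x) ps"
      by (rule map_cong[OF refl]) (use ps w w' in \<open>auto simp: TrVd_def Abs_gadd distrib_left\<close>)
    show "L0 (tadd w w') = gadd (L0 w) (L0 w')"
      using w w' by (simp add: L0_def tadd_TrV typed mone_Emat e sum_list_addf)
  next
    fix w c assume w: "w \<in> TrV m n r" and c: "c \<in> Lam"
    have e: "map (\<lambda>(f, L). Abs_gr (f (mone m n)) * Abs_gr (L (trmul w c))) ps
      = map (\<lambda>x. (\<lambda>(f, L). Abs_gr (f (mone m n)) * Abs_gr (L w)) x * Abs_gr c) ps"
      by (rule map_cong[OF refl]) (use ps w c in \<open>auto simp: TrVd_def Abs_gmul mult.assoc\<close>)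
    show "L0 (trmul w c) = gmul (L0 w) c"
      using w c by (simp add: L0_def trmul_TrV typed mone_Emat e sum_list_mult_const_right)
  next
    fix w assume "w \<notin> TrV m n r" then show "L0 w = gzero" by (simp add: L0_def)
  qed
  have invcase: "\<Phi> (g, w) = L0 (tact m n r g w)" if g: "g \<in> GLV m n" and w: "w \<in> TrV m n r" for g w
  proof -
    define h where "h = ginv m n g"
    have h: "h \<in> GLV m n" unfolding h_def by (rule ginv_GLV[OF g])
    have "\<Phi> (g, w) = Rhat m n r h \<Phi> (g, w)" using inv[OF h] by simp
    also have "\<dots> = \<Phi> (mmul m n g h, tact m n r (ginv m n h) w)"
      using g w by (simp add: Rhat_def GLV_Emat)
    also have "\<dots> = \<Phi> (mone m n, tact m n r g w)"
      using GLV_ginv[OF g] ginv_ginv[OF g] by (simp add: h_def)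
    also have "\<dots> = L0 (tact m n r g w)" using g w by (simp add: L0_def tact_TrV GLV_Emat)
    finally show ?thesis .
  qed
  have key: "\<Phi> (X, w) = L0 (tact m n r X w)" if X: "X \<in> Emat m n" and w: "w \<in> TrV m n r" for X w
  proof -
    define Y where "Y = (\<lambda>t. ofM m n (famM m n X t))"
    have YE: "Y t \<in> Emat m n" for t unfolding Y_def by (rule ofM_Emat[OF famM_carrier famM_even[OF X]])
    have toMY: "toM m n (Y t) = famM m n X t" for t by (simp add: Y_def toM_ofM)
    define D where "D = (\<lambda>t. Abs_gr (\<Phi> (Y t, w)) - Abs_gr (L0 (tact m n r (Y t) w)))"
    have P1: "tpoly (\<lambda>t. Abs_gr (\<Phi> (Y t, w)))"
    proof -
      have "tpoly (\<lambda>t. sum_list (map (\<lambda>p. (\<lambda>(f, L). Abs_gr (f (Y t)) * Abs_gr (L w)) p) ps))"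
      proof (rule tpoly_sum_list)
        fix p assume p: "p \<in> set ps"
        obtain f L where pf: "p = (f, L)" by (cases p)
        have f: "f \<in> Pr m n r" using ps p pf by auto
        have "tpoly (\<lambda>t. Abs_gr (f (Y t)) * Abs_gr (L w))"
          by (intro tpoly_mult tpoly_const tpoly_Pr[OF f YE]) (simp add: Y_def ofM_famM_tpoly)
        then show "tpoly (\<lambda>t. (\<lambda>(f, L). Abs_gr (f (Y t)) * Abs_gr (L w)) p)" by (simp add: pf)
      qed
      then show ?thesis by (simp add: typed[OF YE w] Rep_gr_inverse)
    qed
    have P2: "tpoly (\<lambda>t. Abs_gr (L0 (tact m n r (Y t) w)))"
    proof -
      have "tpoly (\<lambda>t. \<Sum>J\<in>Idx m n r. \<Sum>I\<in>Idx m n r. Lt m n r L0 (eb J) * coef m r (famM m n X t) J I * toV w I)"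
      proof (intro tpoly_sum finite_Idx)
        fix J I assume J: "J \<in> Idx m n r" and I: "I \<in> Idx m n r"
        have "tpoly (\<lambda>t. prod_list (map (\<lambda>a. famM m n X t $$ (J ! a, I ! a)) [0..<r]))"
          by (rule tpoly_prod_list) (use J I in \<open>auto intro!: famM_entry_tpoly simp: Idx_nth_less\<close>)
        then show "tpoly (\<lambda>t. Lt m n r L0 (eb J) * coef m r (famM m n X t) J I * toV w I)"
          unfolding coef_def by (intro tpoly_mult tpoly_const)
      qed
      then show ?thesis by (simp add: L_tact[OF L0 YE w] toMY Rep_gr_inverse)
    qed
    have PD: "tpoly D" unfolding D_def by (rule tpoly_diff[OF P1 P2])
    have "{t. Y t \<in> GLV m n} \<subseteq> {t. D t = 0}"
      using invcase w by (auto simp: D_def)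
    moreover have "infinite {t. Y t \<in> GLV m n}" unfolding Y_def by (rule fam_infinite[OF X])
    ultimately have "infinite {t. D t = 0}" using infinite_super by blast
    then have "D 0 = 0" by (rule tpoly_zero[OF PD])
    moreover have "Y 0 = X" by (simp add: Y_def famM_0 ofM_toM X)
    ultimately have "Abs_gr (\<Phi> (X, w)) = Abs_gr (L0 (tact m n r X w))" by (simp add: D_def)
    moreover have "\<Phi> (X, w) \<in> Lam" by (rule PhiLam[OF X w])
    moreover have "L0 (tact m n r X w) \<in> Lam" using L0 X w by (simp add: TrVd_Lam tact_TrV)
    ultimately show ?thesis by (simp add: Abs_gr_inject)
  qed
  have "Psi m n r L0 = \<Phi>"
  proof (rule ext, clarify)
    fix X w show "Psi m n r L0 (X, w) = \<Phi> (X, w)"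
    proof (cases "X \<in> Emat m n \<and> w \<in> TrV m n r")
      case True then show ?thesis by (simp add: Psi_def key)
    next
      case False show ?thesis unfolding Psi_def case_prod_conv if_not_P[OF False] zero[OF False] ..
    qed
  qed
  then show ?thesis using L0 by blast
qed

theorem proposition3p19:
  fixes m n r :: nat
  shows "(\<forall>L \<in> TrVd m n r. Psi m n r L \<in> PT m n r)
    \<and> (\<forall>L \<in> TrVd m n r. \<forall>L' \<in> TrVd m n r. Psi m n r (dadd L L') = fadd (Psi m n r L) (Psi m n r L'))
    \<and> (\<forall>c \<in> Lam. \<forall>L \<in> TrVd m n r. Psi m n r (dsmul c L) = fsmul c (Psi m n r L))
    \<and> Psi m n r ` TrVd m n r \<subseteq> Gamma m n r
    \<and> bij_betw (Psi m n r) (TrVd m n r) (Gamma m n r)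
    \<and> (\<forall>g \<in> GLV m n. \<forall>L \<in> TrVd m n r. Psi m n r (rho_dual m n r g L) = Lhat m n r g (Psi m n r L))"
proof (intro conjI ballI)
  show "\<And>L. L \<in> TrVd m n r \<Longrightarrow> Psi m n r L \<in> PT m n r" by (rule Psi_PT)
  show "\<And>L L'. Psi m n r (dadd L L') = fadd (Psi m n r L) (Psi m n r L')" by (rule Psi_add)
  show "\<And>c L. Psi m n r (dsmul c L) = fsmul c (Psi m n r L)" by (rule Psi_smul)
  show img: "Psi m n r ` TrVd m n r \<subseteq> Gamma m n r" using Psi_Gamma by blast
  show "bij_betw (Psi m n r) (TrVd m n r) (Gamma m n r)"
    unfolding bij_betw_def
  proof (intro conjI Psi_inj equalityI img subsetI)
    fix \<Phi> assume "\<Phi> \<in> Gamma m n r"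
    then obtain L where "L \<in> TrVd m n r" "Psi m n r L = \<Phi>" using Gamma_surj by blast
    then show "\<Phi> \<in> Psi m n r ` TrVd m n r" by blast
  qed
  show "\<And>g L. g \<in> GLV m n \<Longrightarrow> L \<in> TrVd m n r \<Longrightarrow> Psi m n r (rho_dual m n r g L) = Lhat m n r g (Psi m n r L)"
    by (rule Psi_equiv)
qed


end
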